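(* Let $\Phi(s),\Phi'(s)$, $s\in[0,t]$, be time-dependent potentials and $\kappa>0$. Let $\lambda=\max\{\|\Phi\|_\kappa,\|\Phi'\|_\kappa\}$ and suppose $24\lambda t\leq\kappa$. Let $O$ be an operator supported on a set $S\subseteq\Lambda$, regarded as a potential with the single term $O_S=O$. Let $\Delta(s)=\Phi(s)-\Phi'(s)$, $\mathcal{M}=288/\kappa^2$ and $\mathcal{C}=1+\mathcal{M}\lambda t$ (so $\mathcal{C}\leq1+12/\kappa$). Then $$\|\mathcal{E}_\Phi(t)O-\mathcal{E}_{\Phi'}(t)O\|\leq\mathcal{C}^3\mathcal{M}\,e^{\kappa|S|}\,\|O\|\,t\,\|\Delta\|_\kappa,$$ where on the left the potentials $\mathcal{E}_\Phi(t)O$, $\mathcal{E}_{\Phi'}(t)O$ are identified with their associated operators and $\|\cdot\|$ is the operator norm.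
   Context: $\Lambda$ is a finite set of sites, each carrying a finite-dimensional Hilbert space; $\|\cdot\|$ is the operator norm. A potential $Q$ is a family of operators $Q_Z$, $Z\subseteq\Lambda$, with $Q_Z$ supported on $Z$; its associated operator is $\sum_Z Q_Z$; differences are termwise. Norm: $\|Q\|_\kappa=\sup_{x\in\Lambda}\sum_{Z\ni x}e^{\kappa|Z|}\|Q_Z\|$; for time-dependent potentials on $[0,t]$, $\|\Phi\|_\kappa=\frac1t\int_0^t\|\Phi(s)\|_\kappa ds$. Commutator of potentials: $(\mathrm{ad}_\Phi\Theta)_Z=\sum_{Z_1\cap Z_2\neq\emptyset,Z_1\cup Z_2=Z}[\Phi_{Z_1},\Theta_{Z_2}]$. Dyson-series evolution: $\mathcal{E}_\Phi(t)\Theta=\sum_{n\geq0}i^n\int_0^t dt_1\int_0^{t_1}dt_2\cdots\int_0^{t_{n-1}}dt_n\,\mathrm{ad}_{\Phi(t_1)}\cdots\mathrm{ad}_{\Phi(t_n)}\Theta$. *)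

theory Defs
  imports "HOL-Analysis.Analysis"
begin

text \<open>Quantum spin system on a finite set of sites \<open>\<Lambda>\<close>; site \<open>x\<close> carries the
Hilbert space \<open>\<complex>^(d x)\<close>.  The total Hilbert space is \<open>\<ell>\<^sup>2\<close> over the set of
configurations (basis states of the tensor product).\<close>

type_synonym 's config = "'s \<Rightarrow> nat"
type_synonym 's op = "'s config \<Rightarrow> 's config \<Rightarrow> complex"
type_synonym 's pot = "'s set \<Rightarrow> 's op"

definition configs :: "'s set \<Rightarrow> ('s \<Rightarrow> nat) \<Rightarrow> 's config set" where
  "configs \<Lambda> d = PiE \<Lambda> (\<lambda>x. {..<d x})"

definition mmult :: "'s config set \<Rightarrow> 's op \<Rightarrow> 's op \<Rightarrow> 's op" where
  "mmult C A B = (\<lambda>\<sigma> \<tau>. \<Sum>\<rho>\<in>C. A \<sigma> \<rho> * B \<rho> \<tau>)"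

definition comm :: "'s config set \<Rightarrow> 's op \<Rightarrow> 's op \<Rightarrow> 's op" where
  "comm C A B = (\<lambda>\<sigma> \<tau>. mmult C A B \<sigma> \<tau> - mmult C B A \<sigma> \<tau>)"

definition opnorm :: "'s config set \<Rightarrow> 's op \<Rightarrow> real" where
  "opnorm C A = Sup {sqrt (\<Sum>\<sigma>\<in>C. (cmod (\<Sum>\<tau>\<in>C. A \<sigma> \<tau> * v \<tau>))\<^sup>2) | v.
                      (\<Sum>\<tau>\<in>C. (cmod (v \<tau>))\<^sup>2) \<le> 1}"

text \<open>\<open>A\<close> is supported on \<open>Z\<close>: \<open>A = B \<otimes> 1\<^bsub>\<Lambda>-Z\<^esub>\<close>.\<close>
definition supported_on :: "'s set \<Rightarrow> ('s \<Rightarrow> nat) \<Rightarrow> 's set \<Rightarrow> 's op \<Rightarrow> bool" where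
  "supported_on \<Lambda> d Z A \<longleftrightarrow> Z \<subseteq> \<Lambda> \<and>
     (\<exists>B. \<forall>\<sigma>\<in>configs \<Lambda> d. \<forall>\<tau>\<in>configs \<Lambda> d.
        A \<sigma> \<tau> = (if (\<forall>x\<in>\<Lambda> - Z. \<sigma> x = \<tau> x)
                  then B (restrict \<sigma> Z) (restrict \<tau> Z) else 0))"

definition assoc_op :: "'s set \<Rightarrow> 's pot \<Rightarrow> 's op" where
  "assoc_op \<Lambda> Q = (\<lambda>\<sigma> \<tau>. \<Sum>Z\<in>Pow \<Lambda>. Q Z \<sigma> \<tau>)"

definition pot_diff :: "'s pot \<Rightarrow> 's pot \<Rightarrow> 's pot" where
  "pot_diff P Q = (\<lambda>Z \<sigma> \<tau>. P Z \<sigma> \<tau> - Q Z \<sigma> \<tau>)"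

definition single_pot :: "'s set \<Rightarrow> 's op \<Rightarrow> 's pot" where
  "single_pot S Ob = (\<lambda>Z. if Z = S then Ob else (\<lambda>_ _. 0))"

text \<open>\<open>\<parallel>Q\<parallel>\<^sub>\<kappa> = sup\<^sub>x \<Sum>\<^bsub>Z\<ni>x\<^esub> e^(\<kappa>|Z|) \<parallel>Q\<^sub>Z\<parallel>\<close> (supremum over empty \<open>\<Lambda>\<close> taken as 0).\<close>
definition pot_norm :: "'s set \<Rightarrow> ('s \<Rightarrow> nat) \<Rightarrow> real \<Rightarrow> 's pot \<Rightarrow> real" where
  "pot_norm \<Lambda> d \<kappa> Q = Max (insert 0 ((\<lambda>x. \<Sum>Z\<in>{Z. Z \<subseteq> \<Lambda> \<and> x \<in> Z}.
        exp (\<kappa> * real (card Z)) * opnorm (configs \<Lambda> d) (Q Z)) ` \<Lambda>))"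

definition tpot_norm :: "'s set \<Rightarrow> ('s \<Rightarrow> nat) \<Rightarrow> real \<Rightarrow> real \<Rightarrow> (real \<Rightarrow> 's pot) \<Rightarrow> real" where
  "tpot_norm \<Lambda> d \<kappa> t \<Phi> = (1 / t) * integral {0..t} (\<lambda>s. pot_norm \<Lambda> d \<kappa> (\<Phi> s))"

definition ad_pot :: "'s set \<Rightarrow> ('s \<Rightarrow> nat) \<Rightarrow> 's pot \<Rightarrow> 's pot \<Rightarrow> 's pot" where
  "ad_pot \<Lambda> d P Q = (\<lambda>Z \<sigma> \<tau>.
      \<Sum>(Z1, Z2)\<in>{(Z1, Z2). Z1 \<subseteq> \<Lambda> \<and> Z2 \<subseteq> \<Lambda> \<and> Z1 \<inter> Z2 \<noteq> {} \<and> Z1 \<union> Z2 = Z}.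
         comm (configs \<Lambda> d) (P Z1) (Q Z2) \<sigma> \<tau>)"

text \<open>Iterated simplex integral
  \<open>\<integral>\<^sub>0\<^sup>u dt\<^sub>1 \<integral>\<^sub>0\<^sup>t\<^sup>1 dt\<^sub>2 \<dots> \<integral>\<^sub>0\<^sup>t\<^sup>n\<^sup>-\<^sup>1 dt\<^sub>n F [t\<^sub>1,\<dots>,t\<^sub>n]\<close>, entrywise.\<close>
fun iter_int :: "nat \<Rightarrow> real \<Rightarrow> (real list \<Rightarrow> 's pot) \<Rightarrow> 's pot" where
  "iter_int 0 u F = F []"
| "iter_int (Suc n) u F =
     (\<lambda>Z \<sigma> \<tau>. integral {0..u} (\<lambda>s. iter_int n s (\<lambda>ts. F (s # ts)) Z \<sigma> \<tau>))"

definition dyson :: "'s set \<Rightarrow> ('s \<Rightarrow> nat) \<Rightarrow> (real \<Rightarrow> 's pot) \<Rightarrow> real \<Rightarrow> 's pot \<Rightarrow> 's pot" where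
  "dyson \<Lambda> d \<Phi> t \<Theta> = (\<lambda>Z \<sigma> \<tau>. \<Sum>n. \<i> ^ n *
      iter_int n t (\<lambda>ts. foldr (\<lambda>s acc. ad_pot \<Lambda> d (\<Phi> s) acc) ts \<Theta>) Z \<sigma> \<tau>)"

definition tpot :: "'s set \<Rightarrow> ('s \<Rightarrow> nat) \<Rightarrow> real \<Rightarrow> (real \<Rightarrow> 's pot) \<Rightarrow> bool" where
  "tpot \<Lambda> d t \<Phi> \<longleftrightarrow>
     (\<forall>s\<in>{0..t}. \<forall>Z. Z \<subseteq> \<Lambda> \<longrightarrow> supported_on \<Lambda> d Z (\<Phi> s Z)) \<and>
     (\<forall>Z. Z \<subseteq> \<Lambda> \<longrightarrow> (\<forall>\<sigma>\<in>configs \<Lambda> d. \<forall>\<tau>\<in>configs \<Lambda> d.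
        (\<lambda>s. \<Phi> s Z \<sigma> \<tau>) \<in> borel_measurable (restrict_space lborel {0..t}) \<and>
        bounded ((\<lambda>s. \<Phi> s Z \<sigma> \<tau>) ` {0..t})))"

end

theory Submission
  imports Defs
begin


definition mv :: "'s config set \<Rightarrow> 's op \<Rightarrow> ('s config \<Rightarrow> complex) \<Rightarrow> ('s config \<Rightarrow> complex)" where
  "mv C A v = (\<lambda>\<sigma>. \<Sum>\<tau>\<in>C. A \<sigma> \<tau> * v \<tau>)"

definition vn :: "'s config set \<Rightarrow> ('s config \<Rightarrow> complex) \<Rightarrow> real" where
  "vn C v = L2_set (\<lambda>\<tau>. cmod (v \<tau>)) C"

definition bil :: "'s config set \<Rightarrow> 's op \<Rightarrow> ('s config \<Rightarrow> complex) \<Rightarrow> ('s config \<Rightarrow> complex) \<Rightarrow> complex" where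
  "bil C A u v = (\<Sum>\<sigma>\<in>C. \<Sum>\<tau>\<in>C. cnj (u \<sigma>) * A \<sigma> \<tau> * v \<tau>)"

definition Fr :: "'s config set \<Rightarrow> 's op \<Rightarrow> real" where
  "Fr C A = (\<Sum>\<sigma>\<in>C. \<Sum>\<tau>\<in>C. cmod (A \<sigma> \<tau>))"

lemma vn0: "vn C (\<lambda>_. 0) = 0"
  by (simp add: vn_def L2_set_def)

lemma vn_nonneg: "0 \<le> vn C v"
  by (simp add: vn_def L2_set_nonneg)

lemma vn_le1_iff: "vn C v \<le> 1 \<longleftrightarrow> (\<Sum>\<tau>\<in>C. (cmod (v \<tau>))\<^sup>2) \<le> 1"
  by (simp add: vn_def L2_set_def)

lemma opnorm_alt: "opnorm C A = Sup {vn C (mv C A v) | v. vn C v \<le> 1}"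
  unfolding opnorm_def vn_le1_iff by (simp add: vn_def mv_def L2_set_def)

lemma CS_sum: "cmod (\<Sum>\<sigma>\<in>C. cnj (u \<sigma>) * w \<sigma>) \<le> vn C u * vn C w"
proof -
  have "cmod (\<Sum>\<sigma>\<in>C. cnj (u \<sigma>) * w \<sigma>) \<le> (\<Sum>\<sigma>\<in>C. cmod (u \<sigma>) * cmod (w \<sigma>))"
    by (rule order_trans[OF norm_sum]) (simp add: norm_mult)
  also have "\<dots> \<le> vn C u * vn C w"
    using L2_set_mult_ineq[of "\<lambda>\<sigma>. cmod (u \<sigma>)" "\<lambda>\<sigma>. cmod (w \<sigma>)" C] by (simp add: vn_def)
  finally show ?thesis .
qed

lemma bil_mv: "bil C A u v = (\<Sum>\<sigma>\<in>C. cnj (u \<sigma>) * mv C A v \<sigma>)"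
  by (simp add: bil_def mv_def sum_distrib_left mult.assoc)

lemma vn_cong: "(\<And>x. x \<in> C \<Longrightarrow> v x = w x) \<Longrightarrow> vn C v = vn C w"
  unfolding vn_def by (rule L2_set_cong) auto

lemma vn_scale: "vn C (\<lambda>x. c * v x) = cmod c * vn C v"
  unfolding vn_def by (simp add: norm_mult L2_set_right_distrib)

lemma vn_zero: "finite C \<Longrightarrow> vn C v = 0 \<Longrightarrow> x \<in> C \<Longrightarrow> v x = 0"
  unfolding vn_def by (simp add: L2_set_eq_0_iff)

lemma mv_scale: "mv C A (\<lambda>x. c * v x) = (\<lambda>\<sigma>. c * mv C A v \<sigma>)"
  by (simp add: mv_def sum_distrib_left algebra_simps)

lemma L2_le_sum_nonneg: "(\<And>x. x\<in>C \<Longrightarrow> 0 \<le> f x) \<Longrightarrow> L2_set f C \<le> sum f C"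
  by (rule L2_set_le_sum) auto

context
  fixes C :: "'s config set"
  assumes finC: "finite C"
begin

lemma mv_bound_Fr:
  assumes "vn C v \<le> 1"
  shows "vn C (mv C A v) \<le> Fr C A"
proof -
  have vb: "cmod (v \<tau>) \<le> 1" if "\<tau> \<in> C" for \<tau>
  proof -
    have "cmod (v \<tau>) \<le> vn C v" unfolding vn_def using member_le_L2_set[OF finC that, of "\<lambda>\<tau>. cmod (v \<tau>)"] by simp
    with assms show ?thesis by simp
  qed
  have "vn C (mv C A v) \<le> (\<Sum>\<sigma>\<in>C. cmod (mv C A v \<sigma>))"
    unfolding vn_def by (rule L2_le_sum_nonneg) auto
  also have "\<dots> \<le> Fr C A"
    unfolding Fr_def
  proof (rule sum_mono)
    fix \<sigma> assume "\<sigma> \<in> C"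
    have "cmod (mv C A v \<sigma>) \<le> (\<Sum>\<tau>\<in>C. cmod (A \<sigma> \<tau> * v \<tau>))"
      unfolding mv_def by (rule norm_sum)
    also have "\<dots> \<le> (\<Sum>\<tau>\<in>C. cmod (A \<sigma> \<tau>))"
      using vb by (intro sum_mono) (auto simp: norm_mult intro: mult_left_le)
    finally show "cmod (mv C A v \<sigma>) \<le> (\<Sum>\<tau>\<in>C. cmod (A \<sigma> \<tau>))" .
  qed
  finally show ?thesis .
qed

lemma opnorm_set_ne: "{vn C (mv C A v) | v. vn C v \<le> 1} \<noteq> {}"
proof -
  have "vn C (mv C A (\<lambda>_. 0)) \<in> {vn C (mv C A v) | v. vn C v \<le> 1}" using vn0[of C] by auto
  thus ?thesis by blast
qed

lemma opnorm_set_bdd: "bdd_above {vn C (mv C A v) | v. vn C v \<le> 1}"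
  by (rule bdd_aboveI[of _ "Fr C A"]) (auto intro: mv_bound_Fr)

lemma opnorm_ge: "vn C v \<le> 1 \<Longrightarrow> vn C (mv C A v) \<le> opnorm C A"
  unfolding opnorm_alt by (rule cSup_upper[OF _ opnorm_set_bdd]) auto

lemma opnorm_le: "(\<And>v. vn C v \<le> 1 \<Longrightarrow> vn C (mv C A v) \<le> M) \<Longrightarrow> opnorm C A \<le> M"
  unfolding opnorm_alt by (rule cSup_least[OF opnorm_set_ne]) auto

lemma opnorm_nonneg: "0 \<le> opnorm C A"
  using opnorm_ge[of "\<lambda>_. 0" A] vn_nonneg[of C "mv C A (\<lambda>_. 0)"] vn0[of C] by linarith

lemma opnorm_le_Fr: "opnorm C A \<le> Fr C A"
  by (rule opnorm_le) (rule mv_bound_Fr)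

lemma mv_bound: "vn C (mv C A v) \<le> opnorm C A * vn C v"
proof (cases "vn C v = 0")
  case True
  then have "\<And>x. x \<in> C \<Longrightarrow> v x = 0" using vn_zero finC by blast
  then have "vn C (mv C A v) = vn C (\<lambda>_. 0)"
    by (intro vn_cong) (simp add: mv_def)
  then show ?thesis by (simp add: vn0 True)
next
  case False
  then have pos: "vn C v > 0" using vn_nonneg[of C v] by simp
  define w where "w = (\<lambda>x. complex_of_real (1 / vn C v) * v x)"
  have "vn C w = cmod (complex_of_real (1 / vn C v)) * vn C v" unfolding w_def by (rule vn_scale)
  then have "vn C w = 1" using pos by (simp add: norm_divide)
  then have "vn C (mv C A w) \<le> opnorm C A" by (intro opnorm_ge) simp
  moreover have "vn C (mv C A w) = cmod (complex_of_real (1/vn C v)) * vn C (mv C A v)"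
    unfolding w_def mv_scale by (rule vn_scale)
  then have "vn C (mv C A w) = vn C (mv C A v) / vn C v" using pos by (simp add: norm_divide)
  ultimately show ?thesis using pos by (simp add: divide_le_eq mult.commute)
qed

lemma bil_bound: "cmod (bil C A u v) \<le> opnorm C A * vn C u * vn C v"
proof -
  have "cmod (bil C A u v) \<le> vn C u * vn C (mv C A v)" unfolding bil_mv by (rule CS_sum)
  also have "\<dots> \<le> vn C u * (opnorm C A * vn C v)"
    by (rule mult_left_mono[OF mv_bound vn_nonneg])
  finally show ?thesis by (simp add: algebra_simps)
qed

lemma bil_bound1: "vn C u \<le> 1 \<Longrightarrow> vn C v \<le> 1 \<Longrightarrow> cmod (bil C A u v) \<le> opnorm C A"
proof -
  assume a: "vn C u \<le> 1" "vn C v \<le> 1"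
  have "opnorm C A * vn C u * vn C v \<le> opnorm C A * 1 * 1"
    by (intro mult_mono a opnorm_nonneg vn_nonneg mult_nonneg_nonneg) auto
  with bil_bound[of A u v] show ?thesis by simp
qed

lemma opnorm_le_bil:
  assumes "\<And>u v. vn C u \<le> 1 \<Longrightarrow> vn C v \<le> 1 \<Longrightarrow> cmod (bil C A u v) \<le> M"
  shows "opnorm C A \<le> M"
proof (rule opnorm_le)
  fix v assume v: "vn C v \<le> 1"
  define w where "w = mv C A v"
  show "vn C (mv C A v) \<le> M"
  proof (cases "vn C w = 0")
    case True
    have "cmod (bil C A (\<lambda>_. 0) v) \<le> M" by (rule assms) (auto simp: vn0 v)
    then show ?thesis using True by (simp add: w_def bil_def)
  next
    case False
    then have pos: "vn C w > 0" using vn_nonneg[of C w] by simp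
    define u where "u = (\<lambda>x. complex_of_real (1 / vn C w) * w x)"
    have "vn C u = cmod (complex_of_real (1 / vn C w)) * vn C w" unfolding u_def by (rule vn_scale)
    then have "vn C u = 1" using pos by (simp add: norm_divide)
    have "bil C A u v = (\<Sum>\<sigma>\<in>C. cnj (u \<sigma>) * w \<sigma>)" by (simp add: bil_mv w_def)
    also have "\<dots> = complex_of_real (1 / vn C w) * (\<Sum>\<sigma>\<in>C. complex_of_real ((cmod (w \<sigma>))\<^sup>2))"
      by (simp add: u_def sum_distrib_left mult.assoc, rule sum.cong, simp_all add: complex_norm_square[symmetric] mult.commute)
    also have "\<dots> = complex_of_real (1 / vn C w * (vn C w)\<^sup>2)"
      by (simp add: vn_def L2_set_def sum_nonneg)
    also have "\<dots> = complex_of_real (vn C w)" using pos by (simp add: power2_eq_square)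
    finally have "cmod (bil C A u v) = vn C w" using pos by simp
    moreover have "cmod (bil C A u v) \<le> M" by (rule assms) (simp_all add: \<open>vn C u = 1\<close> v)
    ultimately show ?thesis by (simp add: w_def)
  qed
qed

lemma entry_le_opnorm:
  assumes "\<sigma> \<in> C" "\<tau> \<in> C"
  shows "cmod (A \<sigma> \<tau>) \<le> opnorm C A"
proof -
  define v where "v = (\<lambda>x. if x = \<tau> then (1::complex) else 0)"
  have "vn C v = 1"
  proof -
    have "vn C v = L2_set (\<lambda>x. if x = \<tau> then 1 else 0) C"
      unfolding vn_def by (rule L2_set_cong) (auto simp: v_def)
    also have "\<dots> = sqrt (\<Sum>x\<in>C. if x = \<tau> then 1 else 0)"
      unfolding L2_set_def by (rule arg_cong[where f=sqrt], rule sum.cong) auto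
    also have "\<dots> = 1" using assms finC by simp
    finally show ?thesis .
  qed
  have "mv C A v \<sigma> = A \<sigma> \<tau>" using finC assms by (simp add: mv_def v_def if_distrib cong: if_cong)
  then have "cmod (A \<sigma> \<tau>) \<le> vn C (mv C A v)"
    unfolding vn_def using member_le_L2_set[OF finC assms(1), of "\<lambda>x. cmod (mv C A v x)"] by simp
  also have "\<dots> \<le> opnorm C A" by (rule opnorm_ge) (simp add: \<open>vn C v = 1\<close>)
  finally show ?thesis .
qed

lemma bil_sum: "bil C (\<lambda>\<sigma> \<tau>. \<Sum>i\<in>I. f i \<sigma> \<tau>) u v = (\<Sum>i\<in>I. bil C (f i) u v)"
  unfolding bil_def by (simp add: sum_distrib_left sum_distrib_right) (subst sum.swap, rule sum.cong, simp, subst sum.swap, simp)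

lemma bil_add: "bil C (\<lambda>\<sigma> \<tau>. A \<sigma> \<tau> + B \<sigma> \<tau>) u v = bil C A u v + bil C B u v"
  unfolding bil_def by (simp add: algebra_simps sum.distrib)

lemma bil_diff: "bil C (\<lambda>\<sigma> \<tau>. A \<sigma> \<tau> - B \<sigma> \<tau>) u v = bil C A u v - bil C B u v"
  unfolding bil_def by (simp add: algebra_simps sum_subtractf)

lemma bil_scale: "bil C (\<lambda>\<sigma> \<tau>. c * A \<sigma> \<tau>) u v = c * bil C A u v"
  unfolding bil_def by (simp add: algebra_simps sum_distrib_left)

lemma opnorm_sum: "opnorm C (\<lambda>\<sigma> \<tau>. \<Sum>i\<in>I. f i \<sigma> \<tau>) \<le> (\<Sum>i\<in>I. opnorm C (f i))"
proof (rule opnorm_le_bil)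
  fix u v assume "vn C u \<le> 1" "vn C v \<le> 1"
  then show "cmod (bil C (\<lambda>\<sigma> \<tau>. \<Sum>i\<in>I. f i \<sigma> \<tau>) u v) \<le> (\<Sum>i\<in>I. opnorm C (f i))"
    unfolding bil_sum by (intro order_trans[OF norm_sum] sum_mono bil_bound1)
qed

lemma opnorm_diff: "opnorm C (\<lambda>\<sigma> \<tau>. A \<sigma> \<tau> - B \<sigma> \<tau>) \<le> opnorm C A + opnorm C B"
proof (rule opnorm_le_bil)
  fix u v assume a: "vn C u \<le> 1" "vn C v \<le> 1"
  have "cmod (bil C A u v - bil C B u v) \<le> cmod (bil C A u v) + cmod (bil C B u v)" by (rule norm_triangle_ineq4)
  also have "\<dots> \<le> opnorm C A + opnorm C B" by (intro add_mono bil_bound1 a)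
  finally show "cmod (bil C (\<lambda>\<sigma> \<tau>. A \<sigma> \<tau> - B \<sigma> \<tau>) u v) \<le> opnorm C A + opnorm C B" by (simp add: bil_diff)
qed

lemma opnorm_add: "opnorm C (\<lambda>\<sigma> \<tau>. A \<sigma> \<tau> + B \<sigma> \<tau>) \<le> opnorm C A + opnorm C B"
proof (rule opnorm_le_bil)
  fix u v assume a: "vn C u \<le> 1" "vn C v \<le> 1"
  have "cmod (bil C A u v + bil C B u v) \<le> cmod (bil C A u v) + cmod (bil C B u v)" by (rule norm_triangle_ineq)
  also have "\<dots> \<le> opnorm C A + opnorm C B" by (intro add_mono bil_bound1 a)
  finally show "cmod (bil C (\<lambda>\<sigma> \<tau>. A \<sigma> \<tau> + B \<sigma> \<tau>) u v) \<le> opnorm C A + opnorm C B" by (simp add: bil_add)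
qed

lemma mv_mmult: "mv C (mmult C A B) v = mv C A (mv C B v)"
  unfolding mv_def mmult_def
  by (rule ext) (simp add: sum_distrib_left sum_distrib_right mult.assoc, rule sum.swap)

lemma opnorm_mmult: "opnorm C (mmult C A B) \<le> opnorm C A * opnorm C B"
proof (rule opnorm_le)
  fix v assume v: "vn C v \<le> 1"
  have "vn C (mv C (mmult C A B) v) \<le> opnorm C A * vn C (mv C B v)"
    unfolding mv_mmult by (rule mv_bound)
  also have "\<dots> \<le> opnorm C A * (opnorm C B * vn C v)"
    by (intro mult_left_mono mv_bound opnorm_nonneg)
  also have "\<dots> \<le> opnorm C A * (opnorm C B * 1)"
    by (intro mult_left_mono v opnorm_nonneg mult_nonneg_nonneg)
  finally show "vn C (mv C (mmult C A B) v) \<le> opnorm C A * opnorm C B" by simp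
qed

lemma opnorm_comm: "opnorm C (comm C A B) \<le> 2 * opnorm C A * opnorm C B"
proof -
  have "opnorm C (comm C A B) \<le> opnorm C (mmult C A B) + opnorm C (mmult C B A)"
    unfolding comm_def by (rule opnorm_diff)
  also have "\<dots> \<le> opnorm C A * opnorm C B + opnorm C B * opnorm C A"
    by (intro add_mono opnorm_mmult)
  finally show ?thesis by simp
qed

lemma opnorm_cong: "(\<And>\<sigma> \<tau>. \<sigma> \<in> C \<Longrightarrow> \<tau> \<in> C \<Longrightarrow> A \<sigma> \<tau> = B \<sigma> \<tau>) \<Longrightarrow> opnorm C A = opnorm C B"
  unfolding opnorm_def by (rule arg_cong[where f=Sup]) (auto intro!: sum.cong arg_cong[where f=sqrt])

lemma opnorm_zero: "opnorm C (\<lambda>_ _. 0) = 0"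
  by (rule antisym[OF opnorm_le_bil opnorm_nonneg]) (simp add: bil_def)

end


lemma vn_triangle: "vn C (\<lambda>x. a x + b x) \<le> vn C a + vn C b"
proof -
  have "vn C (\<lambda>x. a x + b x) \<le> L2_set (\<lambda>x. cmod (a x) + cmod (b x)) C"
    unfolding vn_def by (rule L2_set_mono) (auto intro: norm_triangle_ineq)
  also have "\<dots> \<le> vn C a + vn C b" unfolding vn_def by (rule L2_set_triangle_ineq)
  finally show ?thesis .
qed

lemma mv_add: "mv C A (\<lambda>x. a x + b x) = (\<lambda>\<sigma>. mv C A a \<sigma> + mv C A b \<sigma>)"
  by (simp add: mv_def algebra_simps sum.distrib)

context
  fixes C :: "'s config set"
  assumes finC: "finite C"
begin

lemma mv_bound_Fr_gen:
  assumes "\<And>\<tau>. \<tau> \<in> C \<Longrightarrow> cmod (v \<tau>) \<le> b"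
  shows "vn C (mv C A v) \<le> Fr C A * b"
proof -
  have "vn C (mv C A v) \<le> (\<Sum>\<sigma>\<in>C. cmod (mv C A v \<sigma>))"
    unfolding vn_def by (rule L2_le_sum_nonneg) auto
  also have "\<dots> \<le> (\<Sum>\<sigma>\<in>C. (\<Sum>\<tau>\<in>C. cmod (A \<sigma> \<tau>)) * b)"
  proof (rule sum_mono)
    fix \<sigma> assume "\<sigma> \<in> C"
    have "cmod (mv C A v \<sigma>) \<le> (\<Sum>\<tau>\<in>C. cmod (A \<sigma> \<tau> * v \<tau>))"
      unfolding mv_def by (rule norm_sum)
    also have "\<dots> \<le> (\<Sum>\<tau>\<in>C. cmod (A \<sigma> \<tau>) * b)"
      using assms by (intro sum_mono) (auto simp: norm_mult intro: mult_left_mono)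
    finally show "cmod (mv C A v \<sigma>) \<le> (\<Sum>\<tau>\<in>C. cmod (A \<sigma> \<tau>)) * b" by (simp add: sum_distrib_right)
  qed
  also have "\<dots> = Fr C A * b" by (simp add: Fr_def sum_distrib_right)
  finally show ?thesis .
qed

lemma Fr_nonneg: "0 \<le> Fr C A"
  by (simp add: Fr_def sum_nonneg)

lemma dense_approx:
  fixes D :: "complex set"
  assumes dense: "\<And>X. open X \<Longrightarrow> X \<noteq> {} \<Longrightarrow> \<exists>d\<in>D. d \<in> X"
    and v: "vn C v \<le> 1" and eta: "0 < \<eta>" "\<eta> \<le> 1"
  shows "\<exists>w\<in>PiE C (\<lambda>_. D). vn C w \<le> 1 \<and> (\<forall>\<tau>\<in>C. cmod (w \<tau> - v \<tau>) \<le> 2 * \<eta>)"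
proof -
  define r where "r = \<eta> / (real (card C) + 1)"
  have r: "0 < r" "r \<le> \<eta>" using eta by (auto simp: r_def field_simps)
  have ex: "\<exists>d\<in>D. cmod (d - complex_of_real (1 - \<eta>) * v \<tau>) < r" for \<tau>
  proof -
    obtain d where "d \<in> D" "d \<in> ball (complex_of_real (1 - \<eta>) * v \<tau>) r"
      using dense[of "ball (complex_of_real (1 - \<eta>) * v \<tau>) r"] r by auto
    then show ?thesis by (auto simp: dist_norm norm_minus_commute)
  qed
  define w where "w = (\<lambda>\<tau>. if \<tau> \<in> C then (SOME d. d \<in> D \<and> cmod (d - complex_of_real (1 - \<eta>) * v \<tau>) < r) else undefined)"
  have w: "w \<tau> \<in> D \<and> cmod (w \<tau> - complex_of_real (1 - \<eta>) * v \<tau>) < r" if "\<tau> \<in> C" for \<tau>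
    using someI_ex[OF ex[of \<tau>, unfolded Bex_def]] that by (simp add: w_def)
  have wP: "w \<in> PiE C (\<lambda>_. D)" using w by (auto simp: w_def PiE_def extensional_def)
  have vb: "cmod (v \<tau>) \<le> 1" if "\<tau> \<in> C" for \<tau>
  proof -
    have "cmod (v \<tau>) \<le> vn C v" unfolding vn_def using member_le_L2_set[OF finC that, of "\<lambda>\<tau>. cmod (v \<tau>)"] by simp
    with v show ?thesis by simp
  qed
  define e where "e = (\<lambda>\<tau>. w \<tau> - complex_of_real (1 - \<eta>) * v \<tau>)"
  have "vn C w = vn C (\<lambda>\<tau>. complex_of_real (1 - \<eta>) * v \<tau> + e \<tau>)"
    by (rule vn_cong) (simp add: e_def)
  also have "\<dots> \<le> vn C (\<lambda>\<tau>. complex_of_real (1 - \<eta>) * v \<tau>) + vn C e" by (rule vn_triangle)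
  also have "vn C (\<lambda>\<tau>. complex_of_real (1 - \<eta>) * v \<tau>) = cmod (complex_of_real (1 - \<eta>)) * vn C v"
    by (rule vn_scale)
  also have "cmod (complex_of_real (1 - \<eta>)) = 1 - \<eta>"
    using eta by (simp only: norm_of_real)
  also have "vn C e \<le> (\<Sum>\<tau>\<in>C. cmod (e \<tau>))" unfolding vn_def by (rule L2_le_sum_nonneg) auto
  also have "\<dots> \<le> (\<Sum>\<tau>\<in>C. r)" using w by (intro sum_mono) (auto simp: e_def less_imp_le)
  also have "\<dots> \<le> \<eta>" using eta by (simp add: r_def field_simps)
  finally have "vn C w \<le> (1 - \<eta>) * vn C v + \<eta>" by simp
  also have "\<dots> \<le> (1 - \<eta>) * 1 + \<eta>" using eta v by (intro add_mono mult_left_mono) auto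
  finally have wn: "vn C w \<le> 1" by simp
  have "cmod (w \<tau> - v \<tau>) \<le> 2 * \<eta>" if "\<tau> \<in> C" for \<tau>
  proof -
    have "w \<tau> - v \<tau> = e \<tau> - complex_of_real \<eta> * v \<tau>" by (simp add: e_def algebra_simps)
    then have "cmod (w \<tau> - v \<tau>) \<le> cmod (e \<tau>) + cmod (complex_of_real \<eta> * v \<tau>)"
      by (simp add: norm_triangle_ineq4)
    also have "\<dots> \<le> r + \<eta> * 1" using w[OF that] vb[OF that] eta
      by (intro add_mono) (auto simp: e_def norm_mult intro: mult_left_mono)
    finally show ?thesis using r by simp
  qed
  with wP wn show ?thesis by blast
qed

lemma opnorm_SUP:
  fixes D :: "complex set"
  assumes dense: "\<And>X. open X \<Longrightarrow> X \<noteq> {} \<Longrightarrow> \<exists>d\<in>D. d \<in> X"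
  defines "V \<equiv> {w\<in>PiE C (\<lambda>_. D). vn C w \<le> 1}"
  shows "opnorm C A = (SUP w\<in>V. vn C (mv C A w))"
proof -
  have Vne: "V \<noteq> {}" using dense_approx[OF dense, of "\<lambda>_. 0" 1] by (auto simp: V_def vn0)
  have bdd: "bdd_above ((\<lambda>w. vn C (mv C A w)) ` V)"
    by (rule bdd_aboveI[of _ "opnorm C A"]) (auto simp: V_def intro: opnorm_ge[OF finC])
  show ?thesis
  proof (rule antisym)
    show "opnorm C A \<le> (SUP w\<in>V. vn C (mv C A w))"
    proof (rule opnorm_le[OF finC])
      fix v assume v: "vn C v \<le> 1"
      show "vn C (mv C A v) \<le> (SUP w\<in>V. vn C (mv C A w))"
      proof (rule field_le_epsilon)
        fix \<epsilon> :: real assume eps: "0 < \<epsilon>"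
        define \<eta> where "\<eta> = min 1 (\<epsilon> / (2 * Fr C A + 1))"
        have eta: "0 < \<eta>" "\<eta> \<le> 1" using eps Fr_nonneg[of A] by (auto simp: \<eta>_def)
        have "2 * Fr C A * \<eta> \<le> \<epsilon>"
        proof -
          have "2 * Fr C A * \<eta> \<le> (2 * Fr C A + 1) * (\<epsilon> / (2 * Fr C A + 1))"
            using Fr_nonneg[of A] eta by (intro mult_mono) (auto simp: \<eta>_def)
          also have "\<dots> = \<epsilon>" using Fr_nonneg[of A] by simp
          finally show ?thesis .
        qed
        obtain w where w: "w \<in> PiE C (\<lambda>_. D)" "vn C w \<le> 1" "\<forall>\<tau>\<in>C. cmod (w \<tau> - v \<tau>) \<le> 2 * \<eta>"
          using dense_approx[OF dense v eta] by blast
        have "vn C (mv C A v) = vn C (\<lambda>\<sigma>. mv C A w \<sigma> + mv C A (\<lambda>\<tau>. v \<tau> - w \<tau>) \<sigma>)"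
          by (subst mv_add[symmetric]) simp
        also have "\<dots> \<le> vn C (mv C A w) + vn C (mv C A (\<lambda>\<tau>. v \<tau> - w \<tau>))" by (rule vn_triangle)
        also have "vn C (mv C A (\<lambda>\<tau>. v \<tau> - w \<tau>)) \<le> Fr C A * (2 * \<eta>)"
          using w(3) by (intro mv_bound_Fr_gen) (auto simp: norm_minus_commute)
        also have "vn C (mv C A w) \<le> (SUP w\<in>V. vn C (mv C A w))"
          using w by (intro cSUP_upper[OF _ bdd]) (auto simp: V_def)
        finally show "vn C (mv C A v) \<le> (SUP w\<in>V. vn C (mv C A w)) + \<epsilon>"
          using \<open>2 * Fr C A * \<eta> \<le> \<epsilon>\<close> by simp
      qed
    qed
    show "(SUP w\<in>V. vn C (mv C A w)) \<le> opnorm C A"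
      by (rule cSUP_least[OF Vne]) (auto simp: V_def intro: opnorm_ge[OF finC])
  qed
qed

lemma opnorm_measurable:
  assumes "\<And>\<sigma> \<tau>. \<sigma> \<in> C \<Longrightarrow> \<tau> \<in> C \<Longrightarrow> (\<lambda>s. A s \<sigma> \<tau>) \<in> borel_measurable M"
  shows "(\<lambda>s. opnorm C (A s)) \<in> borel_measurable M"
proof -
  obtain D :: "complex set" where D: "countable D" "\<And>X. open X \<Longrightarrow> X \<noteq> {} \<Longrightarrow> \<exists>d\<in>D. d \<in> X"
    by (rule countable_dense_setE) blast
  define V where "V = {w\<in>PiE C (\<lambda>_. D). vn C w \<le> 1}"
  have cV: "countable V" unfolding V_def
    by (rule countable_subset[OF _ countable_PiE[OF finC]]) (use D in auto)
  have eq: "(\<lambda>s. opnorm C (A s)) = (\<lambda>s. SUP w\<in>V. vn C (mv C (A s) w))"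
    using opnorm_SUP[OF D(2)] by (simp add: V_def)
  show ?thesis unfolding eq
  proof (rule borel_measurable_cSUP[OF cV])
    fix w assume "w \<in> V"
    show "(\<lambda>s. vn C (mv C (A s) w)) \<in> borel_measurable M"
      unfolding vn_def mv_def L2_set_def using assms by measurable
  next
    fix s
    show "bdd_above ((\<lambda>w. vn C (mv C (A s) w)) ` V)"
      by (rule bdd_aboveI[of _ "opnorm C (A s)"]) (auto simp: V_def intro: opnorm_ge[OF finC])
  qed
qed

end


lemma exp_ge_e_mult: "exp 1 * y \<le> exp (y::real)"
proof -
  have "y \<le> exp (y - 1)" using exp_ge_add_one_self[of "y - 1"] by simp
  then have "exp 1 * y \<le> exp 1 * exp (y - 1)" by (intro mult_left_mono) auto
  also have "\<dots> = exp y" by (simp add: exp_add[symmetric])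
  finally show ?thesis .
qed

lemma card_exp_bound:
  fixes k1 k2 n :: real
  assumes "k2 < k1" "0 \<le> n"
  shows "n * exp (k2 * n) \<le> exp (k1 * n) / (exp 1 * (k1 - k2))"
proof -
  have h: "0 < k1 - k2" using assms by simp
  have "exp 1 * ((k1 - k2) * n) \<le> exp ((k1 - k2) * n)" by (rule exp_ge_e_mult)
  then have "exp 1 * ((k1 - k2) * n) * exp (k2 * n) \<le> exp ((k1 - k2) * n) * exp (k2 * n)"
    by (intro mult_right_mono) auto
  also have "\<dots> = exp (k1 * n)" by (simp add: exp_add[symmetric] algebra_simps)
  finally have "(exp 1 * (k1 - k2)) * (n * exp (k2 * n)) \<le> exp (k1 * n)" by (simp add: algebra_simps)
  then show ?thesis using h by (simp add: field_simps)
qed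

locale sys =
  fixes \<Lambda> :: "'s set" and d :: "'s \<Rightarrow> nat"
  assumes finL: "finite \<Lambda>"
begin

abbreviation "CC \<equiv> configs \<Lambda> d"

lemma finC: "finite CC"
  unfolding configs_def by (rule finite_PiE[OF finL]) auto

definition Zs :: "'s \<Rightarrow> 's set set" where "Zs x = {Z. Z \<subseteq> \<Lambda> \<and> x \<in> Z}"

lemma finZs: "finite (Zs x)"
  unfolding Zs_def by (rule finite_subset[of _ "Pow \<Lambda>"]) (auto simp: finL)

definition wsum :: "real \<Rightarrow> 's pot \<Rightarrow> 's \<Rightarrow> real" where
  "wsum \<kappa> Q x = (\<Sum>Z\<in>Zs x. exp (\<kappa> * real (card Z)) * opnorm CC (Q Z))"

lemma pot_norm_wsum: "pot_norm \<Lambda> d \<kappa> Q = Max (insert 0 ((wsum \<kappa> Q) ` \<Lambda>))"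
  unfolding pot_norm_def wsum_def Zs_def by simp

lemma wsum_nonneg: "0 \<le> wsum \<kappa> Q x"
  unfolding wsum_def by (intro sum_nonneg mult_nonneg_nonneg opnorm_nonneg[OF finC]) auto

lemma wsum_le_pn: "x \<in> \<Lambda> \<Longrightarrow> wsum \<kappa> Q x \<le> pot_norm \<Lambda> d \<kappa> Q"
  unfolding pot_norm_wsum by (rule Max_ge) (auto simp: finL)

lemma pn_nonneg: "0 \<le> pot_norm \<Lambda> d \<kappa> Q"
  unfolding pot_norm_wsum by (rule Max_ge) (auto simp: finL)

lemma pn_le: "0 \<le> M \<Longrightarrow> (\<And>x. x \<in> \<Lambda> \<Longrightarrow> wsum \<kappa> Q x \<le> M) \<Longrightarrow> pot_norm \<Lambda> d \<kappa> Q \<le> M"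
  unfolding pot_norm_wsum by (subst Max_le_iff) (auto simp: finL)

lemma wsum_mono: "k1 \<le> k2 \<Longrightarrow> wsum k1 Q x \<le> wsum k2 Q x"
  unfolding wsum_def by (intro sum_mono mult_right_mono opnorm_nonneg[OF finC]) (auto intro: mult_right_mono)

lemma pn_mono: "k1 \<le> k2 \<Longrightarrow> pot_norm \<Lambda> d k1 Q \<le> pot_norm \<Lambda> d k2 Q"
  by (rule pn_le[OF pn_nonneg]) (meson order_trans wsum_mono wsum_le_pn)

lemma term_le_wsum: "Z \<subseteq> \<Lambda> \<Longrightarrow> x \<in> Z \<Longrightarrow> exp (\<kappa> * real (card Z)) * opnorm CC (Q Z) \<le> wsum \<kappa> Q x"
  unfolding wsum_def
  by (rule member_le_sum[of Z "Zs x" "\<lambda>Z. exp (\<kappa> * real (card Z)) * opnorm CC (Q Z)"])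
     (auto simp: finZs[unfolded Zs_def] Zs_def intro: mult_nonneg_nonneg opnorm_nonneg[OF finC])

lemma opnorm_le_pn:
  assumes "Z \<subseteq> \<Lambda>" "x \<in> Z" "0 \<le> \<kappa>"
  shows "opnorm CC (Q Z) \<le> pot_norm \<Lambda> d \<kappa> Q"
proof -
  have "opnorm CC (Q Z) \<le> exp (\<kappa> * real (card Z)) * opnorm CC (Q Z)"
    using assms opnorm_nonneg[OF finC, of "Q Z"] by (intro mult_le_cancel_right1[THEN iffD2]) auto
  also have "\<dots> \<le> wsum \<kappa> Q x" by (rule term_le_wsum[OF assms(1,2)])
  also have "\<dots> \<le> pot_norm \<Lambda> d \<kappa> Q" using assms by (intro wsum_le_pn) auto
  finally show ?thesis .
qed

lemma exp_opnorm_le_pn: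
  assumes "Z \<subseteq> \<Lambda>" "x \<in> Z"
  shows "exp (\<kappa> * real (card Z)) * opnorm CC (Q Z) \<le> pot_norm \<Lambda> d \<kappa> Q"
  using assms by (meson order_trans term_le_wsum wsum_le_pn subsetD)

lemma pn_cong:
  assumes "\<And>Z \<sigma> \<tau>. Z \<subseteq> \<Lambda> \<Longrightarrow> \<sigma> \<in> CC \<Longrightarrow> \<tau> \<in> CC \<Longrightarrow> P Z \<sigma> \<tau> = Q Z \<sigma> \<tau>"
  shows "pot_norm \<Lambda> d \<kappa> P = pot_norm \<Lambda> d \<kappa> Q"
proof -
  have "wsum \<kappa> P x = wsum \<kappa> Q x" for x
    unfolding wsum_def Zs_def by (intro sum.cong refl arg_cong2[where f="(*)"] opnorm_cong[OF finC]) (auto intro: assms)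
  then show ?thesis unfolding pot_norm_wsum by simp
qed

definition Pr :: "'s set \<Rightarrow> ('s set \<times> 's set) set" where
  "Pr Z = {(Z1, Z2). Z1 \<subseteq> \<Lambda> \<and> Z2 \<subseteq> \<Lambda> \<and> Z1 \<inter> Z2 \<noteq> {} \<and> Z1 \<union> Z2 = Z}"

lemma finPr: "finite (Pr Z)"
  unfolding Pr_def by (rule finite_subset[of _ "Pow \<Lambda> \<times> Pow \<Lambda>"]) (auto simp: finL)

lemma ad_pot_Pr: "ad_pot \<Lambda> d P Q Z \<sigma> \<tau> = (\<Sum>p\<in>Pr Z. comm CC (P (fst p)) (Q (snd p)) \<sigma> \<tau>)"
  unfolding ad_pot_def Pr_def by (simp add: split_beta)

lemma ad_pot_Pr': "ad_pot \<Lambda> d P Q Z = (\<lambda>\<sigma> \<tau>. \<Sum>p\<in>Pr Z. comm CC (P (fst p)) (Q (snd p)) \<sigma> \<tau>)"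
  by (intro ext) (rule ad_pot_Pr)

lemma opnorm_ad_Z:
  "opnorm CC (ad_pot \<Lambda> d P Q Z) \<le> (\<Sum>p\<in>Pr Z. 2 * opnorm CC (P (fst p)) * opnorm CC (Q (snd p)))"
proof -
  have "opnorm CC (ad_pot \<Lambda> d P Q Z) = opnorm CC (\<lambda>\<sigma> \<tau>. \<Sum>p\<in>Pr Z. comm CC (P (fst p)) (Q (snd p)) \<sigma> \<tau>)"
    by (simp add: ad_pot_Pr')
  also have "\<dots> \<le> (\<Sum>p\<in>Pr Z. opnorm CC (comm CC (P (fst p)) (Q (snd p))))"
    by (rule opnorm_sum[OF finC])
  also have "\<dots> \<le> (\<Sum>p\<in>Pr Z. 2 * opnorm CC (P (fst p)) * opnorm CC (Q (snd p)))"
    by (intro sum_mono opnorm_comm[OF finC])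
  finally show ?thesis .
qed

definition Px1 :: "'s \<Rightarrow> ('s set \<times> 's set) set" where
  "Px1 x = {(Z1, Z2). Z1 \<subseteq> \<Lambda> \<and> Z2 \<subseteq> \<Lambda> \<and> Z1 \<inter> Z2 \<noteq> {} \<and> x \<in> Z1}"

lemma finPx1: "finite (Px1 x)"
  unfolding Px1_def by (rule finite_subset[of _ "Pow \<Lambda> \<times> Pow \<Lambda>"]) (auto simp: finL)

lemma pair_sum_bound:
  assumes f: "\<And>Z. 0 \<le> f Z" and g: "\<And>Z. 0 \<le> g Z"
    and Gm: "\<And>y. y \<in> \<Lambda> \<Longrightarrow> (\<Sum>Z\<in>Zs y. g Z) \<le> Gm"
  shows "(\<Sum>p\<in>Px1 x. f (fst p) * g (snd p)) \<le> (\<Sum>Z1\<in>Zs x. f Z1 * real (card Z1) * Gm)"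
proof -
  define W where "W Z1 = {Z2. Z2 \<subseteq> \<Lambda> \<and> Z1 \<inter> Z2 \<noteq> {}}" for Z1
  have finW: "finite (W Z1)" for Z1
    unfolding W_def by (rule finite_subset[of _ "Pow \<Lambda>"]) (auto simp: finL)
  have "Px1 x = Sigma (Zs x) W" by (auto simp: Px1_def Zs_def W_def)
  moreover have "(\<Sum>Z1\<in>Zs x. \<Sum>Z2\<in>W Z1. f Z1 * g Z2) = (\<Sum>(Z1,Z2)\<in>Sigma (Zs x) W. f Z1 * g Z2)"
    by (rule sum.Sigma) (auto simp: finZs finW)
  ultimately have "(\<Sum>p\<in>Px1 x. f (fst p) * g (snd p)) = (\<Sum>Z1\<in>Zs x. \<Sum>Z2\<in>W Z1. f Z1 * g Z2)"
    by (simp add: split_beta)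
  also have "\<dots> \<le> (\<Sum>Z1\<in>Zs x. f Z1 * (real (card Z1) * Gm))"
  proof (rule sum_mono)
    fix Z1 assume Z1: "Z1 \<in> Zs x"
    have finZ1: "finite Z1" using Z1 finL by (auto simp: Zs_def intro: finite_subset)
    have "(\<Sum>Z2\<in>W Z1. g Z2) \<le> (\<Sum>Z2\<in>W Z1. \<Sum>y\<in>{y\<in>Z1. y \<in> Z2}. g Z2)"
    proof (rule sum_mono)
      fix Z2 assume "Z2 \<in> W Z1"
      then obtain y where "y \<in> Z1" "y \<in> Z2" by (auto simp: W_def)
      then have "0 < card {y\<in>Z1. y \<in> Z2}" using finZ1 by (auto simp: card_gt_0_iff)
      then have c1: "1 \<le> real (card {y\<in>Z1. y \<in> Z2})" by linarith
      have "g Z2 \<le> (\<Sum>y\<in>{y\<in>Z1. y \<in> Z2}. g Z2)"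
        using mult_right_mono[OF c1 g[of Z2]] by simp
      then show "g Z2 \<le> (\<Sum>y\<in>{y\<in>Z1. y \<in> Z2}. g Z2)" .
    qed
    also have "\<dots> = (\<Sum>y\<in>Z1. \<Sum>Z2 | Z2 \<in> W Z1 \<and> y \<in> Z2. g Z2)"
      by (rule sum.swap_restrict[OF finW finZ1])
    also have "\<dots> = (\<Sum>y\<in>Z1. \<Sum>Z2\<in>Zs y. g Z2)"
      by (intro sum.cong refl arg_cong2[where f=sum]) (auto simp: W_def Zs_def)
    also have "\<dots> \<le> (\<Sum>y\<in>Z1. Gm)" using Z1 by (intro sum_mono Gm) (auto simp: Zs_def)
    also have "\<dots> = real (card Z1) * Gm" by simp
    finally have "(\<Sum>Z2\<in>W Z1. g Z2) \<le> real (card Z1) * Gm" .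
    then show "(\<Sum>Z2\<in>W Z1. f Z1 * g Z2) \<le> f Z1 * (real (card Z1) * Gm)"
      by (simp add: sum_distrib_left[symmetric] mult_left_mono f)
  qed
  finally show ?thesis by (simp add: mult.assoc)
qed

lemma ad_bound:
  assumes k: "0 \<le> k2" "k2 < k1"
  shows "pot_norm \<Lambda> d k2 (ad_pot \<Lambda> d P Q)
     \<le> 4 / (exp 1 * (k1 - k2)) * pot_norm \<Lambda> d k1 P * pot_norm \<Lambda> d k1 Q"
proof -
  define pp where "pp Z = opnorm CC (P Z)" for Z
  define qq where "qq Z = opnorm CC (Q Z)" for Z
  have p0: "0 \<le> pp Z" and q0: "0 \<le> qq Z" for Z by (auto simp: pp_def qq_def opnorm_nonneg[OF finC])
  define c where "c = 1 / (exp 1 * (k1 - k2))"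
  have c0: "0 \<le> c" using k by (simp add: c_def)
  define P1 where "P1 = pot_norm \<Lambda> d k1 P"
  define Q1 where "Q1 = pot_norm \<Lambda> d k1 Q"
  have P1: "0 \<le> P1" and Q1: "0 \<le> Q1" by (auto simp: P1_def Q1_def pn_nonneg)
  define fP where "fP Z = exp (k2 * real (card Z)) * pp Z" for Z
  define fQ where "fQ Z = exp (k2 * real (card Z)) * qq Z" for Z
  have fP0: "0 \<le> fP Z" and fQ0: "0 \<le> fQ Z" for Z by (auto simp: fP_def fQ_def p0 q0)
  have sumQ: "(\<Sum>Z\<in>Zs y. fQ Z) \<le> Q1" if "y \<in> \<Lambda>" for y
  proof -
    have "(\<Sum>Z\<in>Zs y. fQ Z) = wsum k2 Q y" by (simp add: wsum_def fQ_def qq_def)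
    also have "\<dots> \<le> wsum k1 Q y" using k by (intro wsum_mono) auto
    also have "\<dots> \<le> Q1" unfolding Q1_def by (rule wsum_le_pn[OF that])
    finally show ?thesis .
  qed
  have sumP: "(\<Sum>Z\<in>Zs y. fP Z) \<le> P1" if "y \<in> \<Lambda>" for y
  proof -
    have "(\<Sum>Z\<in>Zs y. fP Z) = wsum k2 P y" by (simp add: wsum_def fP_def pp_def)
    also have "\<dots> \<le> wsum k1 P y" using k by (intro wsum_mono) auto
    also have "\<dots> \<le> P1" unfolding P1_def by (rule wsum_le_pn[OF that])
    finally show ?thesis .
  qed
  have cardb: "fP Z * real (card Z) \<le> c * (exp (k1 * real (card Z)) * pp Z)" for Z
  proof -
    have "real (card Z) * exp (k2 * real (card Z)) \<le> exp (k1 * real (card Z)) / (exp 1 * (k1 - k2))"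
      using k by (intro card_exp_bound) auto
    then have "real (card Z) * exp (k2 * real (card Z)) * pp Z \<le> exp (k1 * real (card Z)) / (exp 1 * (k1 - k2)) * pp Z"
      by (intro mult_right_mono p0)
    then show ?thesis by (simp add: fP_def c_def algebra_simps)
  qed
  have cardbQ: "fQ Z * real (card Z) \<le> c * (exp (k1 * real (card Z)) * qq Z)" for Z
  proof -
    have "real (card Z) * exp (k2 * real (card Z)) \<le> exp (k1 * real (card Z)) / (exp 1 * (k1 - k2))"
      using k by (intro card_exp_bound) auto
    then have "real (card Z) * exp (k2 * real (card Z)) * qq Z \<le> exp (k1 * real (card Z)) / (exp 1 * (k1 - k2)) * qq Z"
      by (intro mult_right_mono q0)
    then show ?thesis by (simp add: fQ_def c_def algebra_simps)
  qed
  have main: "wsum k2 (ad_pot \<Lambda> d P Q) x \<le> 4 * c * P1 * Q1" if x: "x \<in> \<Lambda>" for x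
  proof -
    define Px where "Px = {(Z1, Z2). Z1 \<subseteq> \<Lambda> \<and> Z2 \<subseteq> \<Lambda> \<and> Z1 \<inter> Z2 \<noteq> {} \<and> x \<in> Z1 \<union> Z2}"
    define Px2 where "Px2 = {(Z1, Z2). Z1 \<subseteq> \<Lambda> \<and> Z2 \<subseteq> \<Lambda> \<and> Z1 \<inter> Z2 \<noteq> {} \<and> x \<in> Z2}"
    have finPx2: "finite Px2" unfolding Px2_def
      by (rule finite_subset[of _ "Pow \<Lambda> \<times> Pow \<Lambda>"]) (auto simp: finL)
    have PxU: "Px = Px1 x \<union> Px2" by (auto simp: Px_def Px1_def Px2_def)
    define F where "F p' = 2 * exp (k2 * real (card (fst p' \<union> snd p'))) * pp (fst p') * qq (snd p')" for p' :: "'s set \<times> 's set"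
    define G where "G p' = 2 * (fP (fst p') * fQ (snd p'))" for p' :: "'s set \<times> 's set"
    have F0: "0 \<le> F p'" for p' by (auto simp: F_def p0 q0)
    have FG: "F p' \<le> G p'" for p'
    proof -
      have "exp (k2 * real (card (fst p' \<union> snd p'))) \<le> exp (k2 * real (card (fst p'))) * exp (k2 * real (card (snd p')))"
        unfolding exp_add[symmetric] using k card_Un_le[of "fst p'" "snd p'"]
        by (simp add: distrib_left[symmetric]) (intro mult_left_mono, simp_all)
      then show ?thesis unfolding F_def G_def fP_def fQ_def
        using p0 q0 by (simp add: mult.assoc mult_left_mono mult_right_mono mult.left_commute)
          (smt (verit, ccfv_SIG) mult_left_mono mult_nonneg_nonneg mult_right_mono p0 q0 mult.commute mult.left_commute)
    qed
    have "wsum k2 (ad_pot \<Lambda> d P Q) x \<le> (\<Sum>Z\<in>Zs x. exp (k2 * real (card Z)) * (\<Sum>p'\<in>Pr Z. 2 * pp (fst p') * qq (snd p')))"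
      unfolding wsum_def pp_def qq_def by (intro sum_mono mult_left_mono opnorm_ad_Z) auto
    also have "\<dots> = (\<Sum>Z\<in>Zs x. \<Sum>p'\<in>Pr Z. F p')"
    proof (intro sum.cong refl)
      fix Z assume "Z \<in> Zs x"
      show "exp (k2 * real (card Z)) * (\<Sum>p'\<in>Pr Z. 2 * pp (fst p') * qq (snd p')) = (\<Sum>p'\<in>Pr Z. F p')"
        unfolding sum_distrib_left by (intro sum.cong refl) (auto simp: F_def Pr_def)
    qed
    also have "\<dots> = (\<Sum>p'\<in>Px. F p')"
    proof -
      have "(\<Sum>Z\<in>Zs x. \<Sum>p'\<in>Pr Z. F p') = (\<Sum>(Z, p')\<in>Sigma (Zs x) Pr. F p')"
        by (rule sum.Sigma) (auto simp: finZs finPr)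
      also have "\<dots> = (\<Sum>p'\<in>Px. F p')"
        by (rule sum.reindex_bij_witness[where j=snd and i="\<lambda>p'. (fst p' \<union> snd p', p')"])
           (auto simp: Zs_def Pr_def Px_def)
      finally show ?thesis .
    qed
    also have "\<dots> \<le> (\<Sum>p'\<in>Px1 x. F p') + (\<Sum>p'\<in>Px2. F p')"
      unfolding PxU using sum_Un[OF finPx1 finPx2, of F] F0 by (simp add: sum_nonneg)
    also have "\<dots> \<le> (\<Sum>p'\<in>Px1 x. G p') + (\<Sum>p'\<in>Px2. G p')"
      by (intro add_mono sum_mono FG)
    also have "(\<Sum>p'\<in>Px2. G p') = (\<Sum>p'\<in>Px1 x. 2 * (fQ (fst p') * fP (snd p')))"
      by (rule sum.reindex_bij_witness[where j="\<lambda>(a,b). (b,a)" and i="\<lambda>(a,b). (b,a)"])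
         (auto simp: Px1_def Px2_def G_def)
    also have "(\<Sum>p'\<in>Px1 x. G p') = 2 * (\<Sum>p'\<in>Px1 x. fP (fst p') * fQ (snd p'))"
      by (simp add: G_def sum_distrib_left)
    also have "(\<Sum>p'\<in>Px1 x. 2 * (fQ (fst p') * fP (snd p'))) = 2 * (\<Sum>p'\<in>Px1 x. fQ (fst p') * fP (snd p'))"
      by (simp add: sum_distrib_left)
    also have "(\<Sum>p'\<in>Px1 x. fP (fst p') * fQ (snd p')) \<le> (\<Sum>Z1\<in>Zs x. fP Z1 * real (card Z1) * Q1)"
      by (rule pair_sum_bound[OF fP0 fQ0 sumQ])
    also have "(\<Sum>p'\<in>Px1 x. fQ (fst p') * fP (snd p')) \<le> (\<Sum>Z1\<in>Zs x. fQ Z1 * real (card Z1) * P1)"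
      by (rule pair_sum_bound[OF fQ0 fP0 sumP])
    also have "(\<Sum>Z1\<in>Zs x. fP Z1 * real (card Z1) * Q1) \<le> (\<Sum>Z1\<in>Zs x. c * (exp (k1 * real (card Z1)) * pp Z1) * Q1)"
      by (intro sum_mono mult_right_mono cardb Q1)
    also have "\<dots> = c * wsum k1 P x * Q1"
      by (simp add: wsum_def pp_def sum_distrib_left sum_distrib_right mult.assoc)
    also have "\<dots> \<le> c * P1 * Q1"
      using x c0 Q1 unfolding P1_def by (intro mult_right_mono mult_left_mono wsum_le_pn) auto
    also have "(\<Sum>Z1\<in>Zs x. fQ Z1 * real (card Z1) * P1) \<le> (\<Sum>Z1\<in>Zs x. c * (exp (k1 * real (card Z1)) * qq Z1) * P1)"
      by (intro sum_mono mult_right_mono cardbQ P1)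
    also have "\<dots> = c * wsum k1 Q x * P1"
      by (simp add: wsum_def qq_def sum_distrib_left sum_distrib_right mult.assoc)
    also have "\<dots> \<le> c * Q1 * P1"
      using x c0 P1 unfolding Q1_def by (intro mult_right_mono mult_left_mono wsum_le_pn) auto
    finally show ?thesis by (simp add: algebra_simps)
  qed
  have "pot_norm \<Lambda> d k2 (ad_pot \<Lambda> d P Q) \<le> 4 * c * P1 * Q1"
    by (rule pn_le[OF _ main]) (use c0 P1 Q1 in auto)
  then show ?thesis by (simp add: c_def P1_def Q1_def)
qed

end


lemma lborel_to_lebesgue:
  "(f::real\<Rightarrow>'b::topological_space) \<in> borel_measurable (restrict_space lborel S) \<Longrightarrow> S \<in> sets lborel \<Longrightarrow> f \<in> borel_measurable (lebesgue_on S)"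
  by (metis borel_measurable_subalgebra mono_restrict_space sets_completionI_sets space_restrict_space2 subsetI)

definition bnd :: "real set \<Rightarrow> (real \<Rightarrow> 'a::real_normed_vector) \<Rightarrow> bool" where
  "bnd S f \<longleftrightarrow> (\<exists>B. \<forall>s\<in>S. norm (f s) \<le> B)"

lemma bnd_const: "bnd S (\<lambda>_. c)" by (auto simp: bnd_def)

lemma bnd_add: "bnd S f \<Longrightarrow> bnd S g \<Longrightarrow> bnd S (\<lambda>s. f s + g s)"
  unfolding bnd_def by (metis (no_types, opaque_lifting) add_mono norm_triangle_ineq order_trans)

lemma bnd_diff: "bnd S f \<Longrightarrow> bnd S g \<Longrightarrow> bnd S (\<lambda>s. f s - g s)"
  unfolding bnd_def by (metis (no_types, opaque_lifting) add_mono norm_triangle_ineq4 order_trans)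

lemma bnd_mult: "bnd S f \<Longrightarrow> bnd S g \<Longrightarrow> bnd S (\<lambda>s. f s * g s :: 'a::real_normed_algebra)"
proof -
  assume "bnd S f" "bnd S g"
  then obtain A B where A: "\<forall>s\<in>S. norm (f s) \<le> A" and B: "\<forall>s\<in>S. norm (g s) \<le> B" by (auto simp: bnd_def)
  have "norm (f s * g s) \<le> A * B" if "s \<in> S" for s
    using A B that by (meson norm_ge_zero norm_mult_ineq order_trans mult_mono)
  then show ?thesis by (auto simp: bnd_def)
qed

lemma bnd_sum: "finite I \<Longrightarrow> (\<And>i. i \<in> I \<Longrightarrow> bnd S (f i)) \<Longrightarrow> bnd S (\<lambda>s. \<Sum>i\<in>I. f i s)"
  by (induction I rule: finite_induct) (auto intro: bnd_add bnd_const)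

lemma bnd_norm: "bnd S f \<Longrightarrow> bnd S (\<lambda>s. norm (f s))"
  by (auto simp: bnd_def)

lemma meas_bnd_absint:
  fixes f :: "real \<Rightarrow> 'a::euclidean_space"
  assumes "f \<in> borel_measurable (lebesgue_on {0..t})" "bnd {0..t} f" "u \<le> t"
  shows "f absolutely_integrable_on {0..u}"
proof (cases "0 \<le> u")
  case True
  obtain B where B: "\<forall>s\<in>{0..t}. norm (f s) \<le> B" using assms(2) by (auto simp: bnd_def)
  have "f absolutely_integrable_on {0..t}"
    by (rule measurable_bounded_by_integrable_imp_absolutely_integrable[OF assms(1), of "\<lambda>_. B"]) (use B in auto)
  then show ?thesis by (rule absolutely_integrable_on_subinterval) (use assms in auto)
next
  case False
  then show ?thesis by simp
qed

lemma meas_bnd_int: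
  fixes f :: "real \<Rightarrow> 'a::euclidean_space"
  assumes "f \<in> borel_measurable (lebesgue_on {0..t})" "bnd {0..t} f" "u \<le> t"
  shows "f integrable_on {0..u}"
  using meas_bnd_absint[OF assms] by (simp add: absolutely_integrable_on_def)

lemma meas_bnd_int_norm:
  fixes f :: "real \<Rightarrow> 'a::euclidean_space"
  assumes "f \<in> borel_measurable (lebesgue_on {0..t})" "bnd {0..t} f" "u \<le> t"
  shows "(\<lambda>s. norm (f s)) integrable_on {0..u}"
  using meas_bnd_absint[OF assms] by (simp add: absolutely_integrable_on_def)

lemma indef_int_meas_bnd:
  fixes f :: "real \<Rightarrow> 'a::euclidean_space"
  assumes "f \<in> borel_measurable (lebesgue_on {0..t})" "bnd {0..t} f"
  shows "(\<lambda>u. integral {0..u} f) \<in> borel_measurable (lebesgue_on {0..t})"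
    and "bnd {0..t} (\<lambda>u. integral {0..u} f)"
    and "continuous_on {0..t} (\<lambda>u. integral {0..u} f)"
proof -
  have int: "f integrable_on {0..t}" by (rule meas_bnd_int[OF assms]) simp
  show c: "continuous_on {0..t} (\<lambda>u. integral {0..u} f)"
    by (rule indefinite_integral_continuous_1[OF int])
  show "(\<lambda>u. integral {0..u} f) \<in> borel_measurable (lebesgue_on {0..t})"
    by (rule continuous_imp_measurable_on_sets_lebesgue[OF c]) simp
  obtain B where B: "\<forall>s\<in>{0..t}. norm (f s) \<le> B" using assms(2) by (auto simp: bnd_def)
  have "norm (integral {0..u} f) \<le> \<bar>B\<bar> * \<bar>t\<bar>" if u: "u \<in> {0..t}" for u
  proof -
    have "norm (integral {0..u} f) \<le> integral {0..u} (\<lambda>_. B)"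
      by (rule integral_norm_bound_integral) (use u B meas_bnd_int[OF assms, of u] in auto)
    also have "\<dots> = B * u" using u by simp
    also have "\<dots> \<le> \<bar>B\<bar> * \<bar>t\<bar>" using u by (intro mult_mono) auto
    finally show ?thesis .
  qed
  then show "bnd {0..t} (\<lambda>u. integral {0..u} f)" unfolding bnd_def by (intro exI[of _ "\<bar>B\<bar> * \<bar>t\<bar>"] ballI)
qed

context sys
begin

definition rel :: "'s set \<Rightarrow> 's config \<Rightarrow> 's config \<Rightarrow> bool" where
  "rel Z \<sigma> \<tau> \<longleftrightarrow> Z \<subseteq> \<Lambda> \<and> \<sigma> \<in> CC \<and> \<tau> \<in> CC"

definition goodfam :: "real \<Rightarrow> (real \<Rightarrow> 's pot) \<Rightarrow> bool" where
  "goodfam t Q \<longleftrightarrow> (\<forall>Z \<sigma> \<tau>. rel Z \<sigma> \<tau> \<longrightarrow>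
      (\<lambda>s. Q s Z \<sigma> \<tau>) \<in> borel_measurable (lebesgue_on {0..t}) \<and> bnd {0..t} (\<lambda>s. Q s Z \<sigma> \<tau>))"

lemma goodfamD: "goodfam t Q \<Longrightarrow> rel Z \<sigma> \<tau> \<Longrightarrow> (\<lambda>s. Q s Z \<sigma> \<tau>) \<in> borel_measurable (lebesgue_on {0..t})"
  "goodfam t Q \<Longrightarrow> rel Z \<sigma> \<tau> \<Longrightarrow> bnd {0..t} (\<lambda>s. Q s Z \<sigma> \<tau>)"
  by (auto simp: goodfam_def)

lemma goodfam_int: "goodfam t Q \<Longrightarrow> rel Z \<sigma> \<tau> \<Longrightarrow> u \<le> t \<Longrightarrow> (\<lambda>s. Q s Z \<sigma> \<tau>) integrable_on {0..u}"
  by (rule meas_bnd_int) (auto simp: goodfam_def)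

lemma tpot_goodfam: "tpot \<Lambda> d t \<Phi> \<Longrightarrow> goodfam t \<Phi>"
  unfolding tpot_def goodfam_def rel_def bnd_def
  by (auto intro!: lborel_to_lebesgue simp: bounded_iff)

lemma goodfam_const: "goodfam t (\<lambda>_. Q)"
  by (auto simp: goodfam_def bnd_const)

lemma goodfam_diff: "goodfam t P \<Longrightarrow> goodfam t Q \<Longrightarrow> goodfam t (\<lambda>s Z \<sigma> \<tau>. P s Z \<sigma> \<tau> - Q s Z \<sigma> \<tau>)"
  unfolding goodfam_def by (auto intro: bnd_diff borel_measurable_diff)

lemma goodfam_add: "goodfam t P \<Longrightarrow> goodfam t Q \<Longrightarrow> goodfam t (\<lambda>s Z \<sigma> \<tau>. P s Z \<sigma> \<tau> + Q s Z \<sigma> \<tau>)"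
  unfolding goodfam_def by (auto intro: bnd_add borel_measurable_add)

lemma goodfam_cong: "goodfam t P \<Longrightarrow> (\<And>s Z \<sigma> \<tau>. rel Z \<sigma> \<tau> \<Longrightarrow> P s Z \<sigma> \<tau> = Q s Z \<sigma> \<tau>) \<Longrightarrow> goodfam t Q"
  unfolding goodfam_def by (metis (no_types, lifting) ext)

lemma ad_expand: "ad_pot \<Lambda> d P Q Z \<sigma> \<tau> =
   (\<Sum>p\<in>Pr Z. \<Sum>\<rho>\<in>CC. P (fst p) \<sigma> \<rho> * Q (snd p) \<rho> \<tau> - Q (snd p) \<sigma> \<rho> * P (fst p) \<rho> \<tau>)"
  by (simp add: ad_pot_Pr comm_def mmult_def sum_subtractf)

lemma Pr_sub: "p \<in> Pr Z \<Longrightarrow> fst p \<subseteq> \<Lambda> \<and> snd p \<subseteq> \<Lambda>"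
  by (auto simp: Pr_def)

lemma goodfam_ad:
  assumes P: "goodfam t P" and Q: "goodfam t Q"
  shows "goodfam t (\<lambda>s. ad_pot \<Lambda> d (P s) (Q s))"
  unfolding goodfam_def ad_expand
proof (intro allI impI conjI)
  fix Z \<sigma> \<tau>
  assume r: "rel Z \<sigma> \<tau>"
  have r1: "rel (fst p) a b" "rel (snd p) a b" if "p \<in> Pr Z" "a \<in> CC" "b \<in> CC" for p a b
    using Pr_sub[OF that(1)] that by (auto simp: rel_def)
  have rs: "\<sigma> \<in> CC" "\<tau> \<in> CC" using r by (auto simp: rel_def)
  show "(\<lambda>s. \<Sum>p\<in>Pr Z. \<Sum>\<rho>\<in>CC. P s (fst p) \<sigma> \<rho> * Q s (snd p) \<rho> \<tau> - Q s (snd p) \<sigma> \<rho> * P s (fst p) \<rho> \<tau>)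
      \<in> borel_measurable (lebesgue_on {0..t})"
    by (intro borel_measurable_sum borel_measurable_diff borel_measurable_times
        goodfamD(1)[OF P] goodfamD(1)[OF Q] r1 rs)
  show "bnd {0..t} (\<lambda>s. \<Sum>p\<in>Pr Z. \<Sum>\<rho>\<in>CC. P s (fst p) \<sigma> \<rho> * Q s (snd p) \<rho> \<tau> - Q s (snd p) \<sigma> \<rho> * P s (fst p) \<rho> \<tau>)"
    by (intro bnd_sum bnd_diff bnd_mult finPr finC goodfamD(2)[OF P] goodfamD(2)[OF Q] r1 rs)
qed

lemma goodfam_integral: "goodfam t Q \<Longrightarrow> goodfam t (\<lambda>u Z \<sigma> \<tau>. integral {0..u} (\<lambda>s. Q s Z \<sigma> \<tau>))"
  unfolding goodfam_def using indef_int_meas_bnd by blast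

lemma bnd_opnorm:
  assumes "goodfam t Q" "Z \<subseteq> \<Lambda>"
  shows "bnd {0..t} (\<lambda>s. opnorm CC (Q s Z))"
proof -
  have "bnd {0..t} (\<lambda>s. Fr CC (Q s Z))" unfolding Fr_def
    using assms by (intro bnd_sum finC bnd_norm) (auto simp: goodfam_def rel_def)
  then obtain B where B: "\<forall>s\<in>{0..t}. norm (Fr CC (Q s Z)) \<le> B" unfolding bnd_def by blast
  have "norm (opnorm CC (Q s Z)) \<le> B" if "s \<in> {0..t}" for s
  proof -
    have f: "norm (Fr CC (Q s Z)) \<le> B" using B that by blast
    have "Fr CC (Q s Z) \<le> B" using abs_le_D1[OF f[unfolded real_norm_def]] .
    then have "opnorm CC (Q s Z) \<le> B" using opnorm_le_Fr[OF finC, of "Q s Z"] by linarith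
    then show ?thesis using opnorm_nonneg[OF finC, of "Q s Z"] by simp
  qed
  then show ?thesis unfolding bnd_def by blast
qed

lemma meas_opnorm:
  assumes "goodfam t Q" "Z \<subseteq> \<Lambda>"
  shows "(\<lambda>s. opnorm CC (Q s Z)) \<in> borel_measurable (lebesgue_on {0..t})"
  by (rule opnorm_measurable[OF finC]) (use assms in \<open>auto simp: goodfam_def rel_def\<close>)

lemma wsum_meas_bnd:
  assumes "goodfam t Q"
  shows "(\<lambda>s. wsum \<kappa> (Q s) x) \<in> borel_measurable (lebesgue_on {0..t})" "bnd {0..t} (\<lambda>s. wsum \<kappa> (Q s) x)"
proof -
  show "(\<lambda>s. wsum \<kappa> (Q s) x) \<in> borel_measurable (lebesgue_on {0..t})"
    unfolding wsum_def using meas_opnorm[OF assms]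
    by (intro borel_measurable_sum borel_measurable_times) (auto simp: Zs_def)
  show "bnd {0..t} (\<lambda>s. wsum \<kappa> (Q s) x)"
    unfolding wsum_def using bnd_opnorm[OF assms]
    by (intro bnd_sum bnd_mult bnd_const finZs) (auto simp: Zs_def)
qed

lemma pn_meas_bnd:
  assumes "goodfam t Q"
  shows "(\<lambda>s. pot_norm \<Lambda> d \<kappa> (Q s)) \<in> borel_measurable (lebesgue_on {0..t})"
    "bnd {0..t} (\<lambda>s. pot_norm \<Lambda> d \<kappa> (Q s))"
proof -
  define h where "h s i = (case i of None \<Rightarrow> 0 | Some x \<Rightarrow> wsum \<kappa> (Q s) x)" for s i
  have eq: "pot_norm \<Lambda> d \<kappa> (Q s) = (MAX i\<in>insert None (Some ` \<Lambda>). h s i)" for s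
    unfolding pot_norm_wsum h_def by (simp add: image_image)
  show "(\<lambda>s. pot_norm \<Lambda> d \<kappa> (Q s)) \<in> borel_measurable (lebesgue_on {0..t})"
    unfolding eq
    by (rule borel_measurable_Max) (auto simp: finL h_def intro: wsum_meas_bnd[OF assms])
  have "\<forall>x\<in>\<Lambda>. \<exists>B. \<forall>s\<in>{0..t}. norm (wsum \<kappa> (Q s) x) \<le> B"
    using wsum_meas_bnd(2)[OF assms] by (auto simp: bnd_def)
  from bchoice[OF this] obtain B where B: "\<forall>x\<in>\<Lambda>. \<forall>s\<in>{0..t}. norm (wsum \<kappa> (Q s) x) \<le> B x" by blast
  have "norm (pot_norm \<Lambda> d \<kappa> (Q s)) \<le> (\<Sum>x\<in>\<Lambda>. \<bar>B x\<bar>)" if s: "s \<in> {0..t}" for s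
  proof -
    have "pot_norm \<Lambda> d \<kappa> (Q s) \<le> (\<Sum>x\<in>\<Lambda>. \<bar>B x\<bar>)"
    proof (rule pn_le)
      show "0 \<le> (\<Sum>x\<in>\<Lambda>. \<bar>B x\<bar>)" by (simp add: sum_nonneg)
      fix x assume x: "x \<in> \<Lambda>"
      have n: "norm (wsum \<kappa> (Q s) x) \<le> B x" using B x s by blast
      have "wsum \<kappa> (Q s) x \<le> \<bar>B x\<bar>" using n abs_ge_self[of "B x"] by simp
      also have "\<dots> \<le> (\<Sum>x\<in>\<Lambda>. \<bar>B x\<bar>)" by (rule member_le_sum) (use x finL in auto)
      finally show "wsum \<kappa> (Q s) x \<le> (\<Sum>x\<in>\<Lambda>. \<bar>B x\<bar>)" .
    qed
    then show ?thesis using pn_nonneg[of \<kappa> "Q s"] by simp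
  qed
  then show "bnd {0..t} (\<lambda>s. pot_norm \<Lambda> d \<kappa> (Q s))" unfolding bnd_def by (intro exI[of _ "\<Sum>x\<in>\<Lambda>. \<bar>B x\<bar>"] ballI)
qed

lemma bil_integral:
  assumes "\<And>\<sigma> \<tau>. \<sigma> \<in> CC \<Longrightarrow> \<tau> \<in> CC \<Longrightarrow> (\<lambda>s. A s \<sigma> \<tau>) integrable_on S"
  shows "bil CC (\<lambda>\<sigma> \<tau>. integral S (\<lambda>s. A s \<sigma> \<tau>)) u v = integral S (\<lambda>s. bil CC (A s) u v)"
    and "(\<lambda>s. bil CC (A s) u v) integrable_on S"
proof -
  have i1: "(\<lambda>s. cnj (u \<sigma>) * A s \<sigma> \<tau> * v \<tau>) integrable_on S" if "\<sigma> \<in> CC" "\<tau> \<in> CC" for \<sigma> \<tau>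
    using assms[OF that] by (intro integrable_on_mult_left integrable_on_mult_right)
  show "(\<lambda>s. bil CC (A s) u v) integrable_on S"
    unfolding bil_def by (intro integrable_sum finC) (use i1 in auto)
  have "bil CC (\<lambda>\<sigma> \<tau>. integral S (\<lambda>s. A s \<sigma> \<tau>)) u v = (\<Sum>\<sigma>\<in>CC. \<Sum>\<tau>\<in>CC. integral S (\<lambda>s. cnj (u \<sigma>) * A s \<sigma> \<tau> * v \<tau>))"
    unfolding bil_def by (simp add: integral_mult_left integral_mult_right)
  also have "\<dots> = (\<Sum>\<sigma>\<in>CC. integral S (\<lambda>s. \<Sum>\<tau>\<in>CC. cnj (u \<sigma>) * A s \<sigma> \<tau> * v \<tau>))"
    by (intro sum.cong refl integral_sum[symmetric] finC) (use i1 in auto)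
  also have "\<dots> = integral S (\<lambda>s. bil CC (A s) u v)"
    unfolding bil_def by (intro integral_sum[symmetric] finC integrable_sum) (use i1 in auto)
  finally show "bil CC (\<lambda>\<sigma> \<tau>. integral S (\<lambda>s. A s \<sigma> \<tau>)) u v = integral S (\<lambda>s. bil CC (A s) u v)" .
qed

lemma opnorm_integral:
  assumes "\<And>\<sigma> \<tau>. \<sigma> \<in> CC \<Longrightarrow> \<tau> \<in> CC \<Longrightarrow> (\<lambda>s. A s \<sigma> \<tau>) integrable_on S"
    and "(\<lambda>s. opnorm CC (A s)) integrable_on S"
  shows "opnorm CC (\<lambda>\<sigma> \<tau>. integral S (\<lambda>s. A s \<sigma> \<tau>)) \<le> integral S (\<lambda>s. opnorm CC (A s))"
proof (rule opnorm_le_bil[OF finC])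
  fix u v assume uv: "vn CC u \<le> 1" "vn CC v \<le> 1"
  have e: "bil CC (\<lambda>\<sigma> \<tau>. integral S (\<lambda>s. A s \<sigma> \<tau>)) u v = integral S (\<lambda>s. bil CC (A s) u v)"
    by (rule bil_integral(1)) (rule assms(1))
  have i: "(\<lambda>s. bil CC (A s) u v) integrable_on S"
    by (rule bil_integral(2)) (rule assms(1))
  have "norm (integral S (\<lambda>s. bil CC (A s) u v)) \<le> integral S (\<lambda>s. opnorm CC (A s))"
    by (rule integral_norm_bound_integral[OF i assms(2)]) (rule bil_bound1[OF finC uv])
  then show "cmod (bil CC (\<lambda>\<sigma> \<tau>. integral S (\<lambda>s. A s \<sigma> \<tau>)) u v) \<le> integral S (\<lambda>s. opnorm CC (A s))"
    by (simp add: e)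
qed

lemma pn_integral:
  assumes Q: "goodfam t Q" and u: "0 \<le> u" "u \<le> t"
    and b: "\<And>s. s \<in> {0..u} \<Longrightarrow> pot_norm \<Lambda> d \<kappa> (Q s) \<le> b s" "b integrable_on {0..u}"
  shows "pot_norm \<Lambda> d \<kappa> (\<lambda>Z \<sigma> \<tau>. integral {0..u} (\<lambda>s. Q s Z \<sigma> \<tau>)) \<le> integral {0..u} b"
proof (rule pn_le)
  show "0 \<le> integral {0..u} b"
    by (rule integral_nonneg[OF b(2)]) (meson b(1) order_trans pn_nonneg)
  fix x assume x: "x \<in> \<Lambda>"
  have iop: "(\<lambda>s. opnorm CC (Q s Z)) integrable_on {0..u}" if "Z \<subseteq> \<Lambda>" for Z
    by (rule meas_bnd_int[OF meas_opnorm[OF Q that] bnd_opnorm[OF Q that] u(2)])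
  have "wsum \<kappa> (\<lambda>Z \<sigma> \<tau>. integral {0..u} (\<lambda>s. Q s Z \<sigma> \<tau>)) x
      \<le> (\<Sum>Z\<in>Zs x. exp (\<kappa> * real (card Z)) * integral {0..u} (\<lambda>s. opnorm CC (Q s Z)))"
    unfolding wsum_def
  proof (intro sum_mono mult_left_mono)
    fix Z assume "Z \<in> Zs x"
    then have Z: "Z \<subseteq> \<Lambda>" by (auto simp: Zs_def)
    show "opnorm CC (\<lambda>\<sigma> \<tau>. integral {0..u} (\<lambda>s. Q s Z \<sigma> \<tau>)) \<le> integral {0..u} (\<lambda>s. opnorm CC (Q s Z))"
      by (rule opnorm_integral[OF goodfam_int[OF Q _ u(2)] iop[OF Z]]) (use Z in \<open>auto simp: rel_def\<close>)
  qed simp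
  also have "\<dots> = integral {0..u} (\<lambda>s. wsum \<kappa> (Q s) x)"
    unfolding wsum_def
    by (subst integral_sum) (auto simp: finZs[unfolded Zs_def] Zs_def intro!: integrable_on_mult_right iop)
  also have "\<dots> \<le> integral {0..u} b"
    by (rule integral_le[OF meas_bnd_int[OF wsum_meas_bnd[OF Q] u(2)] b(2)])
       (meson b(1) order_trans wsum_le_pn x)
  finally show "wsum \<kappa> (\<lambda>Z \<sigma> \<tau>. integral {0..u} (\<lambda>s. Q s Z \<sigma> \<tau>)) x \<le> integral {0..u} b" .
qed

end


context sys
begin

primrec DD :: "(real \<Rightarrow> 's pot) \<Rightarrow> 's pot \<Rightarrow> nat \<Rightarrow> real \<Rightarrow> 's pot" where
  "DD \<Phi> \<Theta> 0 = (\<lambda>u. \<Theta>)"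
| "DD \<Phi> \<Theta> (Suc n) = (\<lambda>u Z \<sigma> \<tau>. integral {0..u} (\<lambda>s. ad_pot \<Lambda> d (\<Phi> s) (DD \<Phi> \<Theta> n s) Z \<sigma> \<tau>))"

lemma goodfam_DD: "goodfam t \<Phi> \<Longrightarrow> goodfam t (DD \<Phi> \<Theta> n)"
proof (induction n)
  case 0
  then show ?case by (simp add: goodfam_const)
next
  case (Suc n)
  have "goodfam t (\<lambda>u Z \<sigma> \<tau>. integral {0..u} (\<lambda>s. ad_pot \<Lambda> d (\<Phi> s) (DD \<Phi> \<Theta> n s) Z \<sigma> \<tau>))"
    by (rule goodfam_integral[OF goodfam_ad[OF Suc.prems Suc.IH[OF Suc.prems]]])
  then show ?case by simp
qed

definition goodL :: "('s pot \<Rightarrow> 's pot) \<Rightarrow> bool" where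
  "goodL L \<longleftrightarrow>
    (\<forall>Q Q'. (\<forall>Z \<sigma> \<tau>. rel Z \<sigma> \<tau> \<longrightarrow> Q Z \<sigma> \<tau> = Q' Z \<sigma> \<tau>) \<longrightarrow> (\<forall>Z \<sigma> \<tau>. rel Z \<sigma> \<tau> \<longrightarrow> L Q Z \<sigma> \<tau> = L Q' Z \<sigma> \<tau>)) \<and>
    (\<forall>Q (u::real). (\<forall>Z \<sigma> \<tau>. rel Z \<sigma> \<tau> \<longrightarrow> (\<lambda>s. Q s Z \<sigma> \<tau>) integrable_on {0..u}) \<longrightarrow>
       (\<forall>Z \<sigma> \<tau>. rel Z \<sigma> \<tau> \<longrightarrow> (\<lambda>s. L (Q s) Z \<sigma> \<tau>) integrable_on {0..u} \<and>
          L (\<lambda>Z \<sigma> \<tau>. integral {0..u} (\<lambda>s. Q s Z \<sigma> \<tau>)) Z \<sigma> \<tau> = integral {0..u} (\<lambda>s. L (Q s) Z \<sigma> \<tau>)))"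

lemma goodL_id: "goodL (\<lambda>Q. Q)"
  unfolding goodL_def by auto

lemma goodL_comp:
  assumes L1: "goodL L1" and L2: "goodL L2"
  shows "goodL (\<lambda>Q. L1 (L2 Q))"
proof -
  have c1: "\<And>Q Q' Z \<sigma> \<tau>. (\<And>Z \<sigma> \<tau>. rel Z \<sigma> \<tau> \<Longrightarrow> Q Z \<sigma> \<tau> = Q' Z \<sigma> \<tau>) \<Longrightarrow> rel Z \<sigma> \<tau> \<Longrightarrow> L1 Q Z \<sigma> \<tau> = L1 Q' Z \<sigma> \<tau>"
    using L1 unfolding goodL_def by blast
  have c2: "\<And>Q Q' Z \<sigma> \<tau>. (\<And>Z \<sigma> \<tau>. rel Z \<sigma> \<tau> \<Longrightarrow> Q Z \<sigma> \<tau> = Q' Z \<sigma> \<tau>) \<Longrightarrow> rel Z \<sigma> \<tau> \<Longrightarrow> L2 Q Z \<sigma> \<tau> = L2 Q' Z \<sigma> \<tau>"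
    using L2 unfolding goodL_def by blast
  have i1: "\<And>Q (u::real) Z \<sigma> \<tau>. (\<And>Z \<sigma> \<tau>. rel Z \<sigma> \<tau> \<Longrightarrow> (\<lambda>s. Q s Z \<sigma> \<tau>) integrable_on {0..u}) \<Longrightarrow> rel Z \<sigma> \<tau> \<Longrightarrow>
      (\<lambda>s. L1 (Q s) Z \<sigma> \<tau>) integrable_on {0..u} \<and>
      L1 (\<lambda>Z \<sigma> \<tau>. integral {0..u} (\<lambda>s. Q s Z \<sigma> \<tau>)) Z \<sigma> \<tau> = integral {0..u} (\<lambda>s. L1 (Q s) Z \<sigma> \<tau>)"
    using L1 unfolding goodL_def by blast
  have i2: "\<And>Q (u::real) Z \<sigma> \<tau>. (\<And>Z \<sigma> \<tau>. rel Z \<sigma> \<tau> \<Longrightarrow> (\<lambda>s. Q s Z \<sigma> \<tau>) integrable_on {0..u}) \<Longrightarrow> rel Z \<sigma> \<tau> \<Longrightarrow>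
      (\<lambda>s. L2 (Q s) Z \<sigma> \<tau>) integrable_on {0..u} \<and>
      L2 (\<lambda>Z \<sigma> \<tau>. integral {0..u} (\<lambda>s. Q s Z \<sigma> \<tau>)) Z \<sigma> \<tau> = integral {0..u} (\<lambda>s. L2 (Q s) Z \<sigma> \<tau>)"
    using L2 unfolding goodL_def by blast
  show ?thesis unfolding goodL_def
  proof (intro conjI allI impI)
    fix Q Q' :: "'s pot" and Z \<sigma> \<tau>
    assume "\<forall>Z \<sigma> \<tau>. rel Z \<sigma> \<tau> \<longrightarrow> Q Z \<sigma> \<tau> = Q' Z \<sigma> \<tau>" "rel Z \<sigma> \<tau>"
    then show "L1 (L2 Q) Z \<sigma> \<tau> = L1 (L2 Q') Z \<sigma> \<tau>"
      by (intro c1 c2) auto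
  next
    fix Q :: "real \<Rightarrow> 's pot" and u :: real and Z \<sigma> \<tau>
    assume a: "\<forall>Z \<sigma> \<tau>. rel Z \<sigma> \<tau> \<longrightarrow> (\<lambda>s. Q s Z \<sigma> \<tau>) integrable_on {0..u}" and r: "rel Z \<sigma> \<tau>"
    have a2: "\<And>Z \<sigma> \<tau>. rel Z \<sigma> \<tau> \<Longrightarrow> (\<lambda>s. L2 (Q s) Z \<sigma> \<tau>) integrable_on {0..u}"
      using i2 a by blast
    show "(\<lambda>s. L1 (L2 (Q s)) Z \<sigma> \<tau>) integrable_on {0..u}"
      using i1[of "\<lambda>s. L2 (Q s)" u Z \<sigma> \<tau>] a2 r by blast
    have "L1 (L2 (\<lambda>Z \<sigma> \<tau>. integral {0..u} (\<lambda>s. Q s Z \<sigma> \<tau>))) Z \<sigma> \<tau>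
        = L1 (\<lambda>Z \<sigma> \<tau>. integral {0..u} (\<lambda>s. L2 (Q s) Z \<sigma> \<tau>)) Z \<sigma> \<tau>"
      by (rule c1[OF _ r]) (use i2 a in blast)
    also have "\<dots> = integral {0..u} (\<lambda>s. L1 (L2 (Q s)) Z \<sigma> \<tau>)"
      using i1[of "\<lambda>s. L2 (Q s)" u Z \<sigma> \<tau>] a2 r by blast
    finally show "L1 (L2 (\<lambda>Z \<sigma> \<tau>. integral {0..u} (\<lambda>s. Q s Z \<sigma> \<tau>))) Z \<sigma> \<tau> = integral {0..u} (\<lambda>s. L1 (L2 (Q s)) Z \<sigma> \<tau>)" .
  qed
qed

lemma goodL_ad: "goodL (ad_pot \<Lambda> d P)"
  unfolding goodL_def
proof (intro conjI allI impI)
  fix Q Q' :: "'s pot" and Z \<sigma> \<tau>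
  assume e: "\<forall>Z \<sigma> \<tau>. rel Z \<sigma> \<tau> \<longrightarrow> Q Z \<sigma> \<tau> = Q' Z \<sigma> \<tau>" and r: "rel Z \<sigma> \<tau>"
  have r1: "rel (snd p) a b" if "p \<in> Pr Z" "a \<in> CC" "b \<in> CC" for p a b
    using Pr_sub[OF that(1)] that by (auto simp: rel_def)
  have rs: "\<sigma> \<in> CC" "\<tau> \<in> CC" using r by (auto simp: rel_def)
  show "ad_pot \<Lambda> d P Q Z \<sigma> \<tau> = ad_pot \<Lambda> d P Q' Z \<sigma> \<tau>"
    unfolding ad_expand by (intro sum.cong refl) (simp add: e r1 rs)
next
  fix Q :: "real \<Rightarrow> 's pot" and u :: real and Z \<sigma> \<tau>
  assume a: "\<forall>Z \<sigma> \<tau>. rel Z \<sigma> \<tau> \<longrightarrow> (\<lambda>s. Q s Z \<sigma> \<tau>) integrable_on {0..u}" and r: "rel Z \<sigma> \<tau>"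
  have r1: "rel (snd p) a b" if "p \<in> Pr Z" "a \<in> CC" "b \<in> CC" for p a b
    using Pr_sub[OF that(1)] that by (auto simp: rel_def)
  have rs: "\<sigma> \<in> CC" "\<tau> \<in> CC" using r by (auto simp: rel_def)
  have ii: "(\<lambda>s. P (fst p) \<sigma> \<rho> * Q s (snd p) \<rho> \<tau> - Q s (snd p) \<sigma> \<rho> * P (fst p) \<rho> \<tau>) integrable_on {0..u}"
    if "p \<in> Pr Z" "\<rho> \<in> CC" for p \<rho>
    using a r1[OF that(1) that(2) rs(2)] r1[OF that(1) rs(1) that(2)]
    by (intro integrable_diff integrable_on_mult_left integrable_on_mult_right) auto
  have ii2: "(\<lambda>s. \<Sum>\<rho>\<in>CC. P (fst p) \<sigma> \<rho> * Q s (snd p) \<rho> \<tau> - Q s (snd p) \<sigma> \<rho> * P (fst p) \<rho> \<tau>) integrable_on {0..u}"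
    if "p \<in> Pr Z" for p
    by (rule integrable_sum[OF finC]) (rule ii[OF that])
  show "(\<lambda>s. ad_pot \<Lambda> d P (Q s) Z \<sigma> \<tau>) integrable_on {0..u}"
    unfolding ad_expand by (rule integrable_sum[OF finPr]) (rule ii2)
  have "ad_pot \<Lambda> d P (\<lambda>Z \<sigma> \<tau>. integral {0..u} (\<lambda>s. Q s Z \<sigma> \<tau>)) Z \<sigma> \<tau>
      = (\<Sum>p\<in>Pr Z. \<Sum>\<rho>\<in>CC. integral {0..u} (\<lambda>s. P (fst p) \<sigma> \<rho> * Q s (snd p) \<rho> \<tau> - Q s (snd p) \<sigma> \<rho> * P (fst p) \<rho> \<tau>))"
    unfolding ad_expand
  proof (intro sum.cong refl)
    fix p \<rho> assume p: "p \<in> Pr Z" and \<rho>: "\<rho> \<in> CC"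
    have ia: "(\<lambda>s. Q s (snd p) \<rho> \<tau>) integrable_on {0..u}" "(\<lambda>s. Q s (snd p) \<sigma> \<rho>) integrable_on {0..u}"
      using a r1[OF p \<rho> rs(2)] r1[OF p rs(1) \<rho>] by auto
    show "P (fst p) \<sigma> \<rho> * integral {0..u} (\<lambda>s. Q s (snd p) \<rho> \<tau>) - integral {0..u} (\<lambda>s. Q s (snd p) \<sigma> \<rho>) * P (fst p) \<rho> \<tau>
       = integral {0..u} (\<lambda>s. P (fst p) \<sigma> \<rho> * Q s (snd p) \<rho> \<tau> - Q s (snd p) \<sigma> \<rho> * P (fst p) \<rho> \<tau>)"
      by (subst integral_diff) (auto intro!: integrable_on_mult_left integrable_on_mult_right ia simp: integral_mult_left integral_mult_right)
  qed
  also have "\<dots> = integral {0..u} (\<lambda>s. ad_pot \<Lambda> d P (Q s) Z \<sigma> \<tau>)"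
  proof -
    have "(\<Sum>p\<in>Pr Z. \<Sum>\<rho>\<in>CC. integral {0..u} (\<lambda>s. P (fst p) \<sigma> \<rho> * Q s (snd p) \<rho> \<tau> - Q s (snd p) \<sigma> \<rho> * P (fst p) \<rho> \<tau>))
        = (\<Sum>p\<in>Pr Z. integral {0..u} (\<lambda>s. \<Sum>\<rho>\<in>CC. P (fst p) \<sigma> \<rho> * Q s (snd p) \<rho> \<tau> - Q s (snd p) \<sigma> \<rho> * P (fst p) \<rho> \<tau>))"
    proof (intro sum.cong refl)
      fix p assume p: "p \<in> Pr Z"
      show "(\<Sum>\<rho>\<in>CC. integral {0..u} (\<lambda>s. P (fst p) \<sigma> \<rho> * Q s (snd p) \<rho> \<tau> - Q s (snd p) \<sigma> \<rho> * P (fst p) \<rho> \<tau>))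
        = integral {0..u} (\<lambda>s. \<Sum>\<rho>\<in>CC. P (fst p) \<sigma> \<rho> * Q s (snd p) \<rho> \<tau> - Q s (snd p) \<sigma> \<rho> * P (fst p) \<rho> \<tau>)"
        by (rule integral_sum[OF finC, symmetric]) (rule ii[OF p])
    qed
    also have "\<dots> = integral {0..u} (\<lambda>s. \<Sum>p\<in>Pr Z. \<Sum>\<rho>\<in>CC. P (fst p) \<sigma> \<rho> * Q s (snd p) \<rho> \<tau> - Q s (snd p) \<sigma> \<rho> * P (fst p) \<rho> \<tau>)"
      by (rule integral_sum[OF finPr, symmetric]) (rule ii2)
    finally show ?thesis unfolding ad_expand .
  qed
  finally show "ad_pot \<Lambda> d P (\<lambda>Z \<sigma> \<tau>. integral {0..u} (\<lambda>s. Q s Z \<sigma> \<tau>)) Z \<sigma> \<tau> = integral {0..u} (\<lambda>s. ad_pot \<Lambda> d P (Q s) Z \<sigma> \<tau>)" .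
qed

lemma iter_int_DD:
  assumes \<Phi>: "goodfam t \<Phi>"
  shows "goodL L \<Longrightarrow> 0 \<le> u \<Longrightarrow> u \<le> t \<Longrightarrow> rel Z \<sigma> \<tau> \<Longrightarrow>
    iter_int n u (\<lambda>ts. L (foldr (\<lambda>s acc. ad_pot \<Lambda> d (\<Phi> s) acc) ts \<Theta>)) Z \<sigma> \<tau> = L (DD \<Phi> \<Theta> n u) Z \<sigma> \<tau>"
proof (induction n arbitrary: L u Z \<sigma> \<tau>)
  case 0
  then show ?case by simp
next
  case (Suc n)
  have "iter_int (Suc n) u (\<lambda>ts. L (foldr (\<lambda>s acc. ad_pot \<Lambda> d (\<Phi> s) acc) ts \<Theta>)) Z \<sigma> \<tau>
     = integral {0..u} (\<lambda>s. iter_int n s (\<lambda>ts. L (ad_pot \<Lambda> d (\<Phi> s) (foldr (\<lambda>s acc. ad_pot \<Lambda> d (\<Phi> s) acc) ts \<Theta>))) Z \<sigma> \<tau>)"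
    by simp
  also have "\<dots> = integral {0..u} (\<lambda>s. L (ad_pot \<Lambda> d (\<Phi> s) (DD \<Phi> \<Theta> n s)) Z \<sigma> \<tau>)"
  proof (rule integral_cong)
    fix s assume s: "s \<in> {0..u}"
    show "iter_int n s (\<lambda>ts. L (ad_pot \<Lambda> d (\<Phi> s) (foldr (\<lambda>s acc. ad_pot \<Lambda> d (\<Phi> s) acc) ts \<Theta>))) Z \<sigma> \<tau>
        = L (ad_pot \<Lambda> d (\<Phi> s) (DD \<Phi> \<Theta> n s)) Z \<sigma> \<tau>"
      by (rule Suc.IH[where L="\<lambda>Q. L (ad_pot \<Lambda> d (\<Phi> s) Q)"]) (use s Suc.prems in \<open>auto intro: goodL_comp goodL_ad\<close>)
  qed
  also have "\<dots> = L (DD \<Phi> \<Theta> (Suc n) u) Z \<sigma> \<tau>"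
  proof -
    have int: "\<forall>Z \<sigma> \<tau>. rel Z \<sigma> \<tau> \<longrightarrow> (\<lambda>s. ad_pot \<Lambda> d (\<Phi> s) (DD \<Phi> \<Theta> n s) Z \<sigma> \<tau>) integrable_on {0..u}"
      using goodfam_int[OF goodfam_ad[OF \<Phi> goodfam_DD[OF \<Phi>]] _ Suc.prems(3)] by blast
    then show ?thesis using Suc.prems(1,4) unfolding goodL_def by simp
  qed
  finally show ?case .
qed

end


lemma bnd_power: "bnd S f \<Longrightarrow> bnd S (\<lambda>s. (f s :: real) ^ j)"
  by (induction j) (auto intro: bnd_mult bnd_const)

lemma pow_diff_ge:
  fixes a b :: real
  assumes "0 \<le> a" "a \<le> b"
  shows "real (Suc j) * ((b - a) * a ^ j) \<le> b ^ Suc j - a ^ Suc j"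
proof -
  have "b ^ Suc j - a ^ Suc j = (b - a) * (\<Sum>i<Suc j. a ^ (Suc j - Suc i) * b ^ i)"
    by (rule power_diff_sumr2)
  moreover have "(\<Sum>i<Suc j. a ^ j) \<le> (\<Sum>i<Suc j. a ^ (Suc j - Suc i) * b ^ i)"
  proof (rule sum_mono)
    fix i assume "i \<in> {..<Suc j}"
    then have i: "i \<le> j" by simp
    have "a ^ j = a ^ (j - i) * a ^ i" using i by (simp add: power_add[symmetric])
    also have "\<dots> \<le> a ^ (j - i) * b ^ i" using assms by (intro mult_left_mono power_mono) auto
    finally show "a ^ j \<le> a ^ (Suc j - Suc i) * b ^ i" by simp
  qed
  then have "(b - a) * (\<Sum>i<Suc j. a ^ j) \<le> (b - a) * (\<Sum>i<Suc j. a ^ (Suc j - Suc i) * b ^ i)"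
    by (rule mult_left_mono) (use assms in simp)
  ultimately have "(b - a) * (\<Sum>i<Suc j. a ^ j) \<le> b ^ Suc j - a ^ Suc j"
    by simp
  then show ?thesis by (simp add: algebra_simps)
qed

lemma step_alg:
  fixes a b \<omega> :: real
  assumes "0 \<le> a" "a \<le> b" "b - a \<le> \<omega>"
    and I: "I \<le> a ^ Suc j / real (Suc j) + \<omega> * a ^ j"
    and P: "p \<le> (b - a) * b ^ j"
  shows "I + p \<le> b ^ Suc j / real (Suc j) + \<omega> * b ^ j"
proof -
  have h1: "(b - a) * a ^ j \<le> (b ^ Suc j - a ^ Suc j) / real (Suc j)"
    using pow_diff_ge[OF assms(1,2), of j] by (simp add: field_simps)
  have aj: "a ^ j \<le> b ^ j" using assms by (intro power_mono) auto
  have h2: "(b - a) * (b ^ j - a ^ j) \<le> \<omega> * (b ^ j - a ^ j)"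
    using assms aj by (intro mult_right_mono) auto
  have "(b - a) * b ^ j = (b - a) * a ^ j + (b - a) * (b ^ j - a ^ j)" by (simp add: algebra_simps)
  then have "p \<le> (b ^ Suc j - a ^ Suc j) / real (Suc j) + \<omega> * (b ^ j - a ^ j)"
    using P h1 h2 by linarith
  with I show ?thesis by (simp add: diff_divide_distrib algebra_simps)
qed

lemma S1:
  fixes w :: "real \<Rightarrow> real"
  assumes wm: "w \<in> borel_measurable (lebesgue_on {0..t})" and wb: "bnd {0..t} w"
    and w0: "\<And>s. s \<in> {0..t} \<Longrightarrow> 0 \<le> w s" and u: "0 \<le> u" "u \<le> t"
  shows "integral {0..u} (\<lambda>s. w s * integral {0..s} w ^ j) \<le> integral {0..u} w ^ Suc j / real (Suc j)"
    and "(\<lambda>s. w s * integral {0..s} w ^ j) integrable_on {0..u}"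
proof -
  define W where "W s = integral {0..s} w" for s
  define f where "f s = w s * W s ^ j" for s
  have Wm: "W \<in> borel_measurable (lebesgue_on {0..t})" "bnd {0..t} W"
    using indef_int_meas_bnd[OF wm wb] by (auto simp: W_def[abs_def])
  have fm: "f \<in> borel_measurable (lebesgue_on {0..t})"
    unfolding f_def[abs_def] using wm Wm by measurable
  have fb: "bnd {0..t} f" unfolding f_def[abs_def] by (intro bnd_mult wb bnd_power Wm)
  have fit: "f integrable_on {0..t}" by (rule meas_bnd_int[OF fm fb]) simp
  have wit: "w integrable_on {0..t}" by (rule meas_bnd_int[OF wm wb]) simp
  show "(\<lambda>s. w s * integral {0..s} w ^ j) integrable_on {0..u}"
    using meas_bnd_int[OF fm fb u(2)] unfolding f_def[abs_def] W_def[abs_def] .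
  obtain K where K: "\<forall>s\<in>{0..t}. norm (w s) \<le> K" using wb by (auto simp: bnd_def)
  have K0: "0 \<le> K" using K u by force
  have Wmono: "W a \<le> W b" if "0 \<le> a" "a \<le> b" "b \<le> t" for a b
    unfolding W_def using that w0
    by (intro integral_subset_le) (auto intro: integrable_on_subinterval[OF wit])
  have W0: "0 \<le> W a" if "0 \<le> a" "a \<le> t" for a
    unfolding W_def using that w0 by (intro integral_nonneg integrable_on_subinterval[OF wit]) auto
  have Wdiff: "W b - W a = integral {a..b} w" if "0 \<le> a" "a \<le> b" "b \<le> t" for a b
    using Henstock_Kurzweil_Integration.integral_combine[where a=0 and c=a and b=b and f=w] that integrable_on_subinterval[OF wit, of 0 b] by (simp add: W_def)
  have Wlip: "W b - W a \<le> K * (b - a)" if "0 \<le> a" "a \<le> b" "b \<le> t" for a b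
  proof -
    have "integral {a..b} w \<le> integral {a..b} (\<lambda>_. K)"
      using that K by (intro integral_le integrable_on_subinterval[OF wit]) (auto, meson abs_le_D1 atLeastAtMost_iff order_trans)
    then show ?thesis using Wdiff[OF that] that by (simp add: mult.commute)
  qed
  have main: "integral {0..u} f \<le> W u ^ Suc j / real (Suc j) + K * u / real m * W u ^ j" if m: "0 < m" for m :: nat
  proof -
    define x where "x k = real k * u / real m" for k
    define \<omega> where "\<omega> = K * u / real m"
    have x0: "0 \<le> x k" for k using u m by (simp add: x_def)
    have xle: "x k \<le> u" if "k \<le> m" for k using u m that by (simp add: x_def field_simps mult_left_mono)
    have xmono: "x k \<le> x (Suc k)" for k using u m by (simp add: x_def field_simps mult_right_mono)
    have xstep: "x (Suc k) - x k = u / real m" for k by (simp add: x_def add_divide_distrib algebra_simps diff_divide_distrib[symmetric])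
    have "integral {0..x k} f \<le> W (x k) ^ Suc j / real (Suc j) + \<omega> * W (x k) ^ j" if "k \<le> m" for k
      using that
    proof (induction k)
      case 0
      have "\<omega> * W 0 ^ j \<ge> 0" using K0 u W0[of 0] by (auto simp: \<omega>_def intro!: mult_nonneg_nonneg)
      then show ?case by (simp add: x_def W_def)
    next
      case (Suc k)
      have k: "k \<le> m" using Suc.prems by simp
      have xs: "x (Suc k) \<le> t" using xle[OF Suc.prems] u by simp
      have a0: "0 \<le> W (x k)" using W0[of "x k"] x0 xle[OF k] u by simp
      have ab: "W (x k) \<le> W (x (Suc k))" using Wmono[OF x0 xmono xs] .
      have bw: "W (x (Suc k)) - W (x k) \<le> \<omega>"
        using Wlip[OF x0 xmono xs] by (simp add: xstep \<omega>_def)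
      have comb: "integral {0..x (Suc k)} f = integral {0..x k} f + integral {x k..x (Suc k)} f"
        using Henstock_Kurzweil_Integration.integral_combine[where a=0 and c="x k" and b="x (Suc k)" and f=f] x0 xmono xs
          integrable_on_subinterval[OF fit, of 0 "x (Suc k)"] by simp
      have piece: "integral {x k..x (Suc k)} f \<le> (W (x (Suc k)) - W (x k)) * W (x (Suc k)) ^ j"
      proof -
        have "integral {x k..x (Suc k)} f \<le> integral {x k..x (Suc k)} (\<lambda>s. w s * W (x (Suc k)) ^ j)"
        proof (rule integral_le)
          show "f integrable_on {x k..x (Suc k)}" using x0 xs by (intro integrable_on_subinterval[OF fit]) auto
          show "(\<lambda>s. w s * W (x (Suc k)) ^ j) integrable_on {x k..x (Suc k)}"
            using x0 xs by (intro integrable_on_mult_left integrable_on_subinterval[OF wit]) auto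
          fix s assume s: "s \<in> {x k..x (Suc k)}"
          then have s0: "0 \<le> s" "s \<le> t" using x0[of k] xs by auto
          have "W s ^ j \<le> W (x (Suc k)) ^ j" using s s0 W0[OF s0] Wmono[of s "x (Suc k)"] xs
            by (intro power_mono) auto
          then show "f s \<le> w s * W (x (Suc k)) ^ j" unfolding f_def using w0[of s] s0
            by (intro mult_left_mono) auto
        qed
        also have "\<dots> = (W (x (Suc k)) - W (x k)) * W (x (Suc k)) ^ j"
          by (simp add: integral_mult_left Wdiff[OF x0 xmono xs])
        finally show ?thesis .
      qed
      show ?case unfolding comb by (rule step_alg[OF a0 ab bw Suc.IH[OF k] piece])
    qed
    from this[of m] m show ?thesis by (simp add: x_def \<omega>_def)
  qed
  have "integral {0..u} f \<le> W u ^ Suc j / real (Suc j)"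
  proof (rule ccontr)
    assume "\<not> ?thesis"
    then have E: "0 < integral {0..u} f - W u ^ Suc j / real (Suc j)" (is "0 < ?E") by simp
    define m where "m = nat \<lceil>K * u * W u ^ j / ?E\<rceil> + 1"
    have m0: "0 < m" by (simp add: m_def)
    have "K * u * W u ^ j / ?E < real m"
      unfolding m_def by linarith
    then have "K * u * W u ^ j < real m * ?E" using E by (simp add: field_simps)
    then have "K * u / real m * W u ^ j < ?E" using m0 by (simp add: field_simps)
    with main[OF m0] show False by linarith
  qed
  then show "integral {0..u} (\<lambda>s. w s * integral {0..s} w ^ j) \<le> integral {0..u} w ^ Suc j / real (Suc j)"
    unfolding f_def[abs_def] W_def[abs_def] .
qed


context sys
begin

lemma pn_zero: "pot_norm \<Lambda> d k (\<lambda>Z \<sigma> \<tau>. 0) = 0"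
proof -
  have "pot_norm \<Lambda> d k (\<lambda>Z \<sigma> \<tau>. 0) \<le> 0"
    by (rule pn_le) (auto simp: wsum_def opnorm_zero[OF finC])
  then show ?thesis using pn_nonneg[of k "\<lambda>Z \<sigma> \<tau>. 0"] by simp
qed

lemma pn_add: "pot_norm \<Lambda> d k (\<lambda>Z \<sigma> \<tau>. P Z \<sigma> \<tau> + Q Z \<sigma> \<tau>) \<le> pot_norm \<Lambda> d k P + pot_norm \<Lambda> d k Q"
proof (rule pn_le)
  show "0 \<le> pot_norm \<Lambda> d k P + pot_norm \<Lambda> d k Q" by (simp add: add_nonneg_nonneg pn_nonneg)
  fix x assume x: "x \<in> \<Lambda>"
  have "wsum k (\<lambda>Z \<sigma> \<tau>. P Z \<sigma> \<tau> + Q Z \<sigma> \<tau>) x \<le> wsum k P x + wsum k Q x"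
    unfolding wsum_def sum.distrib[symmetric] distrib_left[symmetric]
    by (intro sum_mono mult_left_mono opnorm_add[OF finC]) auto
  also have "\<dots> \<le> pot_norm \<Lambda> d k P + pot_norm \<Lambda> d k Q" by (intro add_mono wsum_le_pn x)
  finally show "wsum k (\<lambda>Z \<sigma> \<tau>. P Z \<sigma> \<tau> + Q Z \<sigma> \<tau>) x \<le> pot_norm \<Lambda> d k P + pot_norm \<Lambda> d k Q" .
qed

lemma ad_diff_split:
  "ad_pot \<Lambda> d P Q Z \<sigma> \<tau> - ad_pot \<Lambda> d P' Q' Z \<sigma> \<tau> =
   ad_pot \<Lambda> d (\<lambda>Z \<sigma> \<tau>. P Z \<sigma> \<tau> - P' Z \<sigma> \<tau>) Q Z \<sigma> \<tau> + ad_pot \<Lambda> d P' (\<lambda>Z \<sigma> \<tau>. Q Z \<sigma> \<tau> - Q' Z \<sigma> \<tau>) Z \<sigma> \<tau>"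
  unfolding ad_expand sum_subtractf[symmetric] sum.distrib[symmetric]
  by (intro sum.cong refl) (simp add: algebra_simps)

lemma meas_pow_int:
  fixes f w :: "real \<Rightarrow> real"
  assumes "f \<in> borel_measurable (lebesgue_on {0..t})" "bnd {0..t} f"
    "w \<in> borel_measurable (lebesgue_on {0..t})" "bnd {0..t} w" "u \<le> t"
  shows "(\<lambda>s. f s * integral {0..s} w ^ k) integrable_on {0..u}"
proof -
  have W: "(\<lambda>s. integral {0..s} w) \<in> borel_measurable (lebesgue_on {0..t})" "bnd {0..t} (\<lambda>s. integral {0..s} w)"
    using indef_int_meas_bnd[OF assms(3,4)] by auto
  show ?thesis
    by (rule meas_bnd_int[OF _ _ assms(5)]) (use assms W in \<open>measurable, intro bnd_mult bnd_power\<close>)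
qed

end

locale dys = sys \<Lambda> d for \<Lambda> :: "'s set" and d :: "'s \<Rightarrow> nat" +
  fixes \<Phi> \<Phi>' :: "real \<Rightarrow> 's pot" and \<Theta> :: "'s pot" and t \<kappa> \<delta> :: real and N :: nat
  assumes gP: "goodfam t \<Phi>" and gP': "goodfam t \<Phi>'"
    and t0: "0 < t" and del: "0 < \<delta>" "\<delta> \<le> \<kappa>" and N0: "0 < N"
begin

definition "hh = \<delta> / real N"
definition "cc = 4 / (exp 1 * hh)"
definition "lev j = \<kappa> - real j * hh"
definition "aa s = pot_norm \<Lambda> d \<kappa> (\<Phi> s)"
definition "aa' s = pot_norm \<Lambda> d \<kappa> (\<Phi>' s)"
definition "Dl s = (\<lambda>Z \<sigma> \<tau>. \<Phi> s Z \<sigma> \<tau> - \<Phi>' s Z \<sigma> \<tau>)"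
definition "gg s = pot_norm \<Lambda> d \<kappa> (Dl s)"
definition "AA u = integral {0..u} aa"
definition "BB u = integral {0..u} (\<lambda>s. aa s + aa' s)"
definition "GG u = integral {0..u} gg"
definition "th = pot_norm \<Lambda> d \<kappa> \<Theta>"
definition "EE j u = (\<lambda>Z \<sigma> \<tau>. DD \<Phi> \<Theta> j u Z \<sigma> \<tau> - DD \<Phi>' \<Theta> j u Z \<sigma> \<tau>)"

lemma hh_pos: "0 < hh" using del N0 by (simp add: hh_def)
lemma cc_pos: "0 < cc" using hh_pos by (simp add: cc_def)
lemma lev_ge: "j \<le> N \<Longrightarrow> \<kappa> - \<delta> \<le> lev j"
  using N0 del by (simp add: lev_def hh_def field_simps mult_right_mono)
lemma lev_nonneg: "j \<le> N \<Longrightarrow> 0 \<le> lev j" using lev_ge del by force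
lemma lev_Suc: "lev (Suc j) < lev j" using hh_pos by (simp add: lev_def algebra_simps)
lemma lev_le: "lev j \<le> \<kappa>" using hh_pos by (simp add: lev_def)
lemma cc_eq: "4 / (exp 1 * (lev j - lev (Suc j))) = cc" by (simp add: lev_def cc_def algebra_simps)

lemma gDl: "goodfam t Dl" unfolding Dl_def[abs_def] by (rule goodfam_diff[OF gP gP'])

lemma aa_mb: "aa \<in> borel_measurable (lebesgue_on {0..t})" "bnd {0..t} aa"
  using pn_meas_bnd[OF gP] by (auto simp: aa_def[abs_def])
lemma aa'_mb: "aa' \<in> borel_measurable (lebesgue_on {0..t})" "bnd {0..t} aa'"
  using pn_meas_bnd[OF gP'] by (auto simp: aa'_def[abs_def])
lemma gg_mb: "gg \<in> borel_measurable (lebesgue_on {0..t})" "bnd {0..t} gg"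
  using pn_meas_bnd[OF gDl] by (auto simp: gg_def[abs_def])
lemma ab_mb: "(\<lambda>s. aa s + aa' s) \<in> borel_measurable (lebesgue_on {0..t})" "bnd {0..t} (\<lambda>s. aa s + aa' s)"
  using aa_mb aa'_mb by (auto intro: bnd_add)

lemma aa0: "0 \<le> aa s" "0 \<le> aa' s" "0 \<le> gg s" "0 \<le> th"
  by (auto simp: aa_def aa'_def gg_def th_def pn_nonneg)

lemma int_mono_nonneg:
  fixes f :: "real \<Rightarrow> real"
  assumes "f \<in> borel_measurable (lebesgue_on {0..t})" "bnd {0..t} f" "\<And>s. 0 \<le> f s" "0 \<le> a" "a \<le> b" "b \<le> t"
  shows "integral {0..a} f \<le> integral {0..b} f" "0 \<le> integral {0..a} f"
proof -
  have i: "f integrable_on {0..v}" if "v \<le> t" for v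
    by (rule meas_bnd_int[of f t v]) (use assms that in auto)
  show "integral {0..a} f \<le> integral {0..b} f"
    using assms by (intro integral_subset_le i) auto
  show "0 \<le> integral {0..a} f"
    using assms by (intro integral_nonneg i) auto
qed

lemma AA_le_BB: "0 \<le> u \<Longrightarrow> u \<le> t \<Longrightarrow> AA u \<le> BB u"
  unfolding AA_def BB_def using aa0
  by (intro integral_le meas_bnd_int[OF aa_mb] meas_bnd_int[OF ab_mb]) auto

lemma AA0: "0 \<le> u \<Longrightarrow> u \<le> t \<Longrightarrow> 0 \<le> AA u"
  unfolding AA_def using int_mono_nonneg(2)[OF aa_mb] aa0 by auto
lemma BB_mono: "0 \<le> a \<Longrightarrow> a \<le> b \<Longrightarrow> b \<le> t \<Longrightarrow> BB a \<le> BB b" "0 \<le> a \<Longrightarrow> a \<le> t \<Longrightarrow> 0 \<le> BB a"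
  unfolding BB_def using int_mono_nonneg[OF ab_mb] aa0 by (auto intro: add_nonneg_nonneg)
lemma GG_mono: "0 \<le> a \<Longrightarrow> a \<le> b \<Longrightarrow> b \<le> t \<Longrightarrow> GG a \<le> GG b" "0 \<le> a \<Longrightarrow> a \<le> t \<Longrightarrow> 0 \<le> GG a"
  unfolding GG_def using int_mono_nonneg[OF gg_mb] aa0 by auto

lemma D_bound:
  "j \<le> N \<Longrightarrow> 0 \<le> u \<Longrightarrow> u \<le> t \<Longrightarrow> pot_norm \<Lambda> d (lev j) (DD \<Phi> \<Theta> j u) \<le> cc ^ j * AA u ^ j / fact j * th"
proof (induction j arbitrary: u)
  case 0
  then show ?case by (simp add: lev_def th_def)
next
  case (Suc j)
  define Q where "Q s = ad_pot \<Lambda> d (\<Phi> s) (DD \<Phi> \<Theta> j s)" for s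
  have gQ: "goodfam t Q" unfolding Q_def[abs_def] by (rule goodfam_ad[OF gP goodfam_DD[OF gP]])
  define b where "b s = cc ^ Suc j * th / fact j * (aa s * AA s ^ j)" for s
  have bnd: "pot_norm \<Lambda> d (lev (Suc j)) (Q s) \<le> b s" if s: "s \<in> {0..u}" for s
  proof -
    have "pot_norm \<Lambda> d (lev (Suc j)) (Q s) \<le> cc * pot_norm \<Lambda> d (lev j) (\<Phi> s) * pot_norm \<Lambda> d (lev j) (DD \<Phi> \<Theta> j s)"
      unfolding Q_def cc_eq[of j, symmetric] using lev_nonneg[OF Suc.prems(1)] lev_Suc by (intro ad_bound) auto
    also have "\<dots> \<le> cc * aa s * (cc ^ j * AA s ^ j / fact j * th)"
      using cc_pos Suc.IH[of s] Suc.prems s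
      by (intro mult_mono mult_left_mono pn_mono lev_le pn_nonneg) (auto simp: aa_def pn_nonneg intro: pn_mono lev_le)
    also have "\<dots> = b s" by (simp add: b_def)
    finally show ?thesis .
  qed
  have bint: "b integrable_on {0..u}"
    unfolding b_def AA_def using S1(2)[OF aa_mb _ Suc.prems(2,3)] aa0 by (intro integrable_on_mult_right) auto
  have "pot_norm \<Lambda> d (lev (Suc j)) (DD \<Phi> \<Theta> (Suc j) u) \<le> integral {0..u} b"
    using pn_integral[OF gQ Suc.prems(2,3) bnd bint] by (simp add: Q_def)
  also have "\<dots> = cc ^ Suc j * th / fact j * integral {0..u} (\<lambda>s. aa s * AA s ^ j)"
    unfolding b_def by (rule integral_mult_right)
  also have "\<dots> \<le> cc ^ Suc j * th / fact j * (AA u ^ Suc j / real (Suc j))"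
    unfolding AA_def using cc_pos aa0
    by (intro mult_left_mono S1(1)[OF aa_mb _ Suc.prems(2,3)]) auto
  also have "\<dots> = cc ^ Suc j * AA u ^ Suc j / fact (Suc j) * th"
    by (simp add: field_simps)
  finally show ?case .
qed


lemma alg2: fixes c tt G P F q :: real assumes "F \<noteq> 0" "q \<noteq> 0"
  shows "c * tt * (G * P / (q*F) + G*q/F*(P/q)) = c * G * (q + 1) * P / (q*F) * tt"
  using assms by (simp add: field_simps)

lemma int_div: "integral S (\<lambda>s. f s / (c::real)) = integral S f / c"
  using integral_mult_left[of S f "1 / c"] by simp

lemma int_div_on: "f integrable_on S \<Longrightarrow> (\<lambda>s. f s / (c::real)) integrable_on S"
  using integrable_on_mult_left[of f S "1 / c"] by simp

lemma gEE: "goodfam t (EE j)"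
  unfolding EE_def[abs_def] by (rule goodfam_diff[OF goodfam_DD[OF gP] goodfam_DD[OF gP']])

lemma EE_Suc:
  assumes r: "rel Z \<sigma> \<tau>" and u: "u \<le> t"
  shows "EE (Suc j) u Z \<sigma> \<tau> = integral {0..u} (\<lambda>s. ad_pot \<Lambda> d (Dl s) (DD \<Phi> \<Theta> j s) Z \<sigma> \<tau> + ad_pot \<Lambda> d (\<Phi>' s) (EE j s) Z \<sigma> \<tau>)"
proof -
  have i1: "(\<lambda>s. ad_pot \<Lambda> d (\<Phi> s) (DD \<Phi> \<Theta> j s) Z \<sigma> \<tau>) integrable_on {0..u}"
    by (rule goodfam_int[OF goodfam_ad[OF gP goodfam_DD[OF gP]] r u])
  have i2: "(\<lambda>s. ad_pot \<Lambda> d (\<Phi>' s) (DD \<Phi>' \<Theta> j s) Z \<sigma> \<tau>) integrable_on {0..u}"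
    by (rule goodfam_int[OF goodfam_ad[OF gP' goodfam_DD[OF gP']] r u])
  have "EE (Suc j) u Z \<sigma> \<tau> = integral {0..u} (\<lambda>s. ad_pot \<Lambda> d (\<Phi> s) (DD \<Phi> \<Theta> j s) Z \<sigma> \<tau> - ad_pot \<Lambda> d (\<Phi>' s) (DD \<Phi>' \<Theta> j s) Z \<sigma> \<tau>)"
    by (simp add: EE_def integral_diff[OF i1 i2])
  also have "\<dots> = integral {0..u} (\<lambda>s. ad_pot \<Lambda> d (Dl s) (DD \<Phi> \<Theta> j s) Z \<sigma> \<tau> + ad_pot \<Lambda> d (\<Phi>' s) (EE j s) Z \<sigma> \<tau>)"
    by (rule integral_cong) (simp add: ad_diff_split Dl_def EE_def)
  finally show ?thesis .
qed

lemma E_bound: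
  "j \<le> N \<Longrightarrow> 0 \<le> u \<Longrightarrow> u \<le> t \<Longrightarrow>
   pot_norm \<Lambda> d (lev j) (EE j u) \<le> cc ^ j * GG u * real j * BB u ^ (j - 1) / fact (j - 1) * th"
proof (induction j arbitrary: u)
  case 0
  have "EE 0 u = (\<lambda>Z \<sigma> \<tau>. 0)" by (simp add: EE_def)
  then show ?case by (simp add: pn_zero)
next
  case (Suc j)
  have jN: "j \<le> N" using Suc.prems by simp
  define Q where "Q s = (\<lambda>Z \<sigma> \<tau>. ad_pot \<Lambda> d (Dl s) (DD \<Phi> \<Theta> j s) Z \<sigma> \<tau> + ad_pot \<Lambda> d (\<Phi>' s) (EE j s) Z \<sigma> \<tau>)" for s
  have gQ: "goodfam t Q" unfolding Q_def[abs_def]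
    by (rule goodfam_add[OF goodfam_ad[OF gDl goodfam_DD[OF gP]] goodfam_ad[OF gP' gEE]])
  define b where "b s = cc ^ Suc j * th * (gg s * BB s ^ j / fact j + GG u * real j / fact (j - 1) * (aa' s * BB s ^ (j - 1)))" for s
  have GGu: "0 \<le> GG u" using GG_mono(2) Suc.prems by auto
  have bnd: "pot_norm \<Lambda> d (lev (Suc j)) (Q s) \<le> b s" if s: "s \<in> {0..u}" for s
  proof -
    have s0: "0 \<le> s" "s \<le> t" using s Suc.prems by auto
    have l: "0 \<le> lev (Suc j)" "lev (Suc j) < lev j" using lev_nonneg[OF Suc.prems(1)] lev_Suc by auto
    have "pot_norm \<Lambda> d (lev (Suc j)) (Q s) \<le> pot_norm \<Lambda> d (lev (Suc j)) (ad_pot \<Lambda> d (Dl s) (DD \<Phi> \<Theta> j s))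
        + pot_norm \<Lambda> d (lev (Suc j)) (ad_pot \<Lambda> d (\<Phi>' s) (EE j s))"
      unfolding Q_def by (rule pn_add)
    also have "\<dots> \<le> cc * pot_norm \<Lambda> d (lev j) (Dl s) * pot_norm \<Lambda> d (lev j) (DD \<Phi> \<Theta> j s)
        + cc * pot_norm \<Lambda> d (lev j) (\<Phi>' s) * pot_norm \<Lambda> d (lev j) (EE j s)"
      unfolding cc_eq[of j, symmetric] using l by (intro add_mono ad_bound) auto
    also have "\<dots> \<le> cc * gg s * (cc ^ j * BB s ^ j / fact j * th)
        + cc * aa' s * (cc ^ j * GG u * real j * BB s ^ (j - 1) / fact (j - 1) * th)"
    proof (intro add_mono mult_mono mult_left_mono)
      show "pot_norm \<Lambda> d (lev j) (Dl s) \<le> gg s" unfolding gg_def by (rule pn_mono[OF lev_le])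
      show "pot_norm \<Lambda> d (lev j) (\<Phi>' s) \<le> aa' s" unfolding aa'_def by (rule pn_mono[OF lev_le])
      have "pot_norm \<Lambda> d (lev j) (DD \<Phi> \<Theta> j s) \<le> cc ^ j * AA s ^ j / fact j * th"
        by (rule D_bound[OF jN s0])
      also have "\<dots> \<le> cc ^ j * BB s ^ j / fact j * th"
        using cc_pos aa0 AA0[OF s0] AA_le_BB[OF s0]
        by (intro mult_right_mono divide_right_mono mult_left_mono power_mono) auto
      finally show "pot_norm \<Lambda> d (lev j) (DD \<Phi> \<Theta> j s) \<le> cc ^ j * BB s ^ j / fact j * th" .
      have "pot_norm \<Lambda> d (lev j) (EE j s) \<le> cc ^ j * GG s * real j * BB s ^ (j - 1) / fact (j - 1) * th"
        by (rule Suc.IH[OF jN s0])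
      also have "\<dots> \<le> cc ^ j * GG u * real j * BB s ^ (j - 1) / fact (j - 1) * th"
        using cc_pos aa0 BB_mono(2)[OF s0] GG_mono(1)[of s u] s0 s Suc.prems
        by (intro mult_right_mono divide_right_mono mult_left_mono zero_le_power) auto
      finally show "pot_norm \<Lambda> d (lev j) (EE j s) \<le> cc ^ j * GG u * real j * BB s ^ (j - 1) / fact (j - 1) * th" .
    qed (use cc_pos aa0 pn_nonneg in \<open>auto simp: gg_def aa'_def\<close>)
    also have "\<dots> = b s" by (simp add: b_def field_simps)
    finally show ?thesis .
  qed
  have int1: "(\<lambda>s. gg s * BB s ^ j) integrable_on {0..u}"
    unfolding BB_def by (rule meas_pow_int[OF gg_mb ab_mb Suc.prems(3)])
  have int2: "(\<lambda>s. aa' s * BB s ^ (j - 1)) integrable_on {0..u}"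
    unfolding BB_def by (rule meas_pow_int[OF aa'_mb ab_mb Suc.prems(3)])
  have bint: "b integrable_on {0..u}" unfolding b_def
    by (intro integrable_on_mult_right integrable_add int_div_on int1 int2)
  have h1: "integral {0..u} (\<lambda>s. gg s * BB s ^ j) \<le> GG u * BB u ^ j"
  proof -
    have "integral {0..u} (\<lambda>s. gg s * BB s ^ j) \<le> integral {0..u} (\<lambda>s. gg s * BB u ^ j)"
    proof (rule integral_le[OF int1])
      show "(\<lambda>s. gg s * BB u ^ j) integrable_on {0..u}"
        unfolding GG_def by (intro integrable_on_mult_left meas_bnd_int[OF gg_mb Suc.prems(3)])
      fix s assume "s \<in> {0..u}"
      then show "gg s * BB s ^ j \<le> gg s * BB u ^ j"
        using Suc.prems aa0 BB_mono(1)[of s u] BB_mono(2)[of s] by (intro mult_left_mono power_mono) auto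
    qed
    also have "\<dots> = GG u * BB u ^ j" by (simp add: GG_def integral_mult_left)
    finally show "integral {0..u} (\<lambda>s. gg s * BB s ^ j) \<le> GG u * BB u ^ j" .
  qed
  have h2: "integral {0..u} (\<lambda>s. aa' s * BB s ^ (j - 1)) \<le> BB u ^ Suc (j - 1) / real (Suc (j - 1))"
  proof -
    have "integral {0..u} (\<lambda>s. aa' s * BB s ^ (j - 1)) \<le> integral {0..u} (\<lambda>s. (aa s + aa' s) * BB s ^ (j - 1))"
    proof (rule integral_le[OF int2])
      show "(\<lambda>s. (aa s + aa' s) * BB s ^ (j - 1)) integrable_on {0..u}"
        unfolding BB_def by (rule meas_pow_int[OF ab_mb ab_mb Suc.prems(3)])
      fix s assume "s \<in> {0..u}"
      then show "aa' s * BB s ^ (j - 1) \<le> (aa s + aa' s) * BB s ^ (j - 1)"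
        using Suc.prems aa0 BB_mono(2)[of s] by (intro mult_right_mono) auto
    qed
    also have "\<dots> \<le> BB u ^ Suc (j - 1) / real (Suc (j - 1))"
      unfolding BB_def by (rule S1(1)[OF ab_mb _ Suc.prems(2,3)]) (use aa0 in \<open>auto intro: add_nonneg_nonneg\<close>)
    finally show ?thesis .
  qed
  have "pot_norm \<Lambda> d (lev (Suc j)) (EE (Suc j) u) = pot_norm \<Lambda> d (lev (Suc j)) (\<lambda>Z \<sigma> \<tau>. integral {0..u} (\<lambda>s. Q s Z \<sigma> \<tau>))"
    by (rule pn_cong) (simp add: EE_Suc rel_def Suc.prems Q_def)
  also have "\<dots> \<le> integral {0..u} b" by (rule pn_integral[OF gQ Suc.prems(2,3) bnd bint])
  also have "integral {0..u} b = cc ^ Suc j * th * (integral {0..u} (\<lambda>s. gg s * BB s ^ j) / fact j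
      + GG u * real j / fact (j - 1) * integral {0..u} (\<lambda>s. aa' s * BB s ^ (j - 1)))"
  proof -
    have "integral {0..u} b = cc ^ Suc j * th * integral {0..u} (\<lambda>s. gg s * BB s ^ j / fact j + GG u * real j / fact (j - 1) * (aa' s * BB s ^ (j - 1)))"
      unfolding b_def by (rule integral_mult_right)
    also have "integral {0..u} (\<lambda>s. gg s * BB s ^ j / fact j + GG u * real j / fact (j - 1) * (aa' s * BB s ^ (j - 1)))
        = integral {0..u} (\<lambda>s. gg s * BB s ^ j) / fact j + GG u * real j / fact (j - 1) * integral {0..u} (\<lambda>s. aa' s * BB s ^ (j - 1))"
    proof -
      have i1': "(\<lambda>s. gg s * BB s ^ j / fact j) integrable_on {0..u}" by (rule int_div_on[OF int1])
      have i2': "(\<lambda>s. GG u * real j / fact (j - 1) * (aa' s * BB s ^ (j - 1))) integrable_on {0..u}"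
        by (rule integrable_on_mult_right[OF int2])
      show ?thesis by (simp only: integral_add[OF i1' i2'] int_div integral_mult_right)
    qed
    finally show ?thesis .
  qed
  also have "\<dots> \<le> cc ^ Suc j * th * (GG u * BB u ^ j / fact j + GG u * real j / fact (j - 1) * (BB u ^ Suc (j - 1) / real (Suc (j - 1))))"
    using cc_pos aa0 GGu by (intro mult_left_mono add_mono divide_right_mono h1 mult_left_mono[OF h2]) auto
  also have "\<dots> = cc ^ Suc j * GG u * real (Suc j) * BB u ^ (Suc j - 1) / fact (Suc j - 1) * th"
  proof (cases j)
    case 0
    then show ?thesis by simp
  next
    case (Suc i)
    define F where "F = (fact i :: real)"
    have F: "F \<noteq> 0" by (simp add: F_def)
    have q: "real j \<noteq> 0" by (simp add: Suc)
    have fj: "fact j = real j * F" by (simp add: Suc F_def)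
    have fSj: "fact (Suc j - 1) = real j * F" using fj by simp
    have rj: "real (Suc j) = real j + 1" "real (Suc (j - 1)) = real j" by (simp_all add: Suc)
    have fi: "fact (j - 1) = F" by (simp add: Suc F_def)
    have pw: "BB u ^ Suc (j - 1) = BB u ^ j" "BB u ^ (Suc j - 1) = BB u ^ j" by (simp_all add: Suc)
    show ?thesis unfolding fj fSj rj fi pw by (rule alg2[OF F q])
  qed
  finally show ?case .
qed

end


lemma pow_fact_exp: "real n ^ n / fact n \<le> exp (real n)"
proof -
  have s: "(\<lambda>k. real n ^ k / fact k) sums exp (real n)"
    using exp_converges[of "real n"] by (simp add: divide_inverse scaleR_conv_of_real mult.commute)
  have "(\<Sum>k\<in>{n}. real n ^ k / fact k) \<le> (\<Sum>k. real n ^ k / fact k)"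
    by (rule sum_le_suminf[OF sums_summable[OF s]]) auto
  then show ?thesis using sums_unique[OF s] by simp
qed

lemma sq_le_pow: "real n ^ 2 \<le> 4 * (3/2::real) ^ n"
proof -
  have big: "real (m + 5) ^ 2 \<le> 4 * (3/2::real) ^ (m + 5)" for m
  proof (induction m)
    case 0 then show ?case by (simp add: power_divide)
  next
    case (Suc m)
    define x where "x = real (m + 5)"
    have x5: "5 \<le> x" by (simp add: x_def)
    have xx: "5 * x \<le> x * x" using x5 by (intro mult_right_mono) auto
    have e: "real (Suc m + 5) = x + 1" by (simp add: x_def)
    have "(x + 1) * (x + 1) = x * x + 2 * x + 1" by (simp add: algebra_simps)
    then have "real (Suc m + 5) ^ 2 \<le> 3/2 * real (m + 5) ^ 2"
      unfolding e x_def[symmetric] power2_eq_square using xx x5 by linarith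
    also have "\<dots> \<le> 3/2 * (4 * (3/2) ^ (m + 5))" using Suc.IH by simp
    also have "\<dots> = 4 * (3/2::real) ^ (Suc m + 5)" by (simp del: power_Suc add: power_add power_divide)
    finally show ?case .
  qed
  show ?thesis
  proof (cases "n < 5")
    case True
    then have "n = 0 \<or> n = 1 \<or> n = 2 \<or> n = 3 \<or> n = 4" by auto
    then show ?thesis by (auto simp: power_divide)
  next
    case False
    then obtain m where "n = m + 5" by (metis add.commute le_Suc_ex not_less)
    then show ?thesis using big[of m] by simp
  qed
qed

lemma geo_bound: "real n ^ 2 * (1/2) ^ (n - 1) \<le> 8 * (3/4::real) ^ n"
proof (cases n)
  case 0 then show ?thesis by simp
next
  case (Suc m)
  have "real n ^ 2 * (1/2) ^ (n - 1) = 2 * (real n ^ 2 * (1/2) ^ n)" by (simp add: Suc)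
  also have "\<dots> \<le> 2 * (4 * (3/2) ^ n * (1/2) ^ n)" using sq_le_pow[of n] by (intro mult_left_mono mult_right_mono) auto
  also have "\<dots> = 8 * (3/4::real) ^ n" by (simp add: power_mult_distrib[symmetric])
  finally show ?thesis .
qed

lemma arith1:
  fixes A \<kappa> :: real
  assumes "0 \<le> A" "A \<le> \<kappa>/24" "0 < \<kappa>" "0 < n"
  shows "(4 / (exp 1 * (2*\<kappa>/3 / real n))) ^ n * A ^ n / fact n \<le> (1/4) ^ n"
proof -
  have c: "4 / (exp 1 * (2*\<kappa>/3 / real n)) = 6 * real n / (exp 1 * \<kappa>)" using assms by (simp add: field_simps)
  have c0: "0 \<le> 6 * real n / (exp 1 * \<kappa>)" using assms by simp
  have "(6 * real n / (exp 1 * \<kappa>)) ^ n * A ^ n = (6 * real n / (exp 1 * \<kappa>) * A) ^ n" by (rule power_mult_distrib[symmetric])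
  also have "\<dots> \<le> (6 * real n / (exp 1 * \<kappa>) * (\<kappa>/24)) ^ n"
    using assms c0 by (intro power_mono mult_left_mono) auto
  also have "6 * real n / (exp 1 * \<kappa>) * (\<kappa>/24) = real n / (4 * exp 1)" using assms by (simp add: field_simps)
  finally have "(6 * real n / (exp 1 * \<kappa>)) ^ n * A ^ n / fact n \<le> (real n / (4 * exp 1)) ^ n / fact n"
    by (intro divide_right_mono) auto
  also have "\<dots> = (real n ^ n / fact n) / (4 * exp 1) ^ n" by (simp add: power_divide)
  also have "\<dots> \<le> exp (real n) / (4 * exp 1) ^ n"
    by (intro divide_right_mono pow_fact_exp) auto
  also have "\<dots> = (1/4) ^ n" by (simp add: exp_of_nat_mult[symmetric] power_divide power_mult_distrib)
  finally show ?thesis unfolding c .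
qed

lemma arith2:
  fixes B \<kappa> :: real
  assumes "0 \<le> B" "B \<le> \<kappa>/12" "0 < \<kappa>" "0 < n"
  shows "(4 / (exp 1 * (2*\<kappa>/3 / real n))) ^ n * real n * B ^ (n - 1) / fact (n - 1) \<le> 6/\<kappa> * (real n ^ 2 * (1/2) ^ (n - 1))"
proof -
  obtain m where n: "n = Suc m" using assms by (cases n) auto
  have c: "4 / (exp 1 * (2*\<kappa>/3 / real n)) = 6 / \<kappa> * (real n / exp 1)" using assms by (simp add: field_simps)
  have fn: "fact n = real n * fact m" by (simp add: n del: of_nat_Suc)
  have "(4 / (exp 1 * (2*\<kappa>/3 / real n))) ^ n * real n * B ^ (n - 1) / fact (n - 1)
      = (6 / \<kappa>) ^ n * real n ^ 2 * B ^ m * ((real n ^ n / fact n) / exp 1 ^ n)"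
  proof -
    have a: "(6 / \<kappa> * (real n / exp 1)) ^ n * real n * B ^ m / fact m
        = (6 / \<kappa>) ^ n * real n ^ 2 * B ^ m * ((real n ^ n / (real n * fact m)) / exp 1 ^ n)"
      using assms by (simp add: power_mult_distrib power_divide field_simps power2_eq_square)
    show ?thesis unfolding c fn using a by (simp add: n)
  qed
  also have "\<dots> \<le> (6 / \<kappa>) ^ n * real n ^ 2 * B ^ m * (exp (real n) / exp 1 ^ n)"
    using assms by (intro mult_left_mono divide_right_mono pow_fact_exp) auto
  also have "exp (real n) / exp 1 ^ n = 1" by (simp add: exp_of_nat_mult[symmetric])
  also have "(6 / \<kappa>) ^ n * real n ^ 2 * B ^ m * 1 \<le> (6 / \<kappa>) ^ n * real n ^ 2 * (\<kappa>/12) ^ m"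
    using assms by (simp only: mult_1_right) (intro mult_left_mono power_mono, auto)
  also have "\<dots> = 6/\<kappa> * (real n ^ 2 * (1/2) ^ (n - 1))"
  proof -
    have h: "(6/\<kappa>) * (\<kappa>/12) = 1/2" using assms by simp
    have "(6 / \<kappa>) ^ n * (\<kappa>/12) ^ m = 6/\<kappa> * ((6/\<kappa>) * (\<kappa>/12)) ^ m"
      by (simp only: n power_Suc power_mult_distrib mult.assoc)
    then have "(6 / \<kappa>) ^ n * (\<kappa>/12) ^ m = 6/\<kappa> * (1/2) ^ m" by (simp only: h)
    then show ?thesis by (simp add: n algebra_simps)
  qed
  finally show ?thesis .
qed


context sys
begin

lemma opnorm_scale: "opnorm CC (\<lambda>\<sigma> \<tau>. c * A \<sigma> \<tau>) \<le> cmod c * opnorm CC A"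
proof (rule opnorm_le_bil[OF finC])
  fix u v assume uv: "vn CC u \<le> 1" "vn CC v \<le> 1"
  have "cmod (c * bil CC A u v) \<le> cmod c * opnorm CC A"
    unfolding norm_mult by (intro mult_left_mono bil_bound1[OF finC uv]) auto
  then show "cmod (bil CC (\<lambda>\<sigma> \<tau>. c * A \<sigma> \<tau>) u v) \<le> cmod c * opnorm CC A"
    by (simp add: bil_scale[OF finC])
qed

lemma bil_cong: "(\<And>\<sigma> \<tau>. \<sigma> \<in> CC \<Longrightarrow> \<tau> \<in> CC \<Longrightarrow> A \<sigma> \<tau> = B \<sigma> \<tau>) \<Longrightarrow> bil CC A u v = bil CC B u v"
  unfolding bil_def by (intro sum.cong refl) auto

lemma bil_suminf:
  assumes s: "\<And>\<sigma> \<tau>. \<sigma> \<in> CC \<Longrightarrow> \<tau> \<in> CC \<Longrightarrow> summable (\<lambda>n. f n \<sigma> \<tau>)"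
  shows "bil CC (\<lambda>\<sigma> \<tau>. \<Sum>n. f n \<sigma> \<tau>) u v = (\<Sum>n. bil CC (f n) u v)"
proof -
  have s1: "summable (\<lambda>n. cnj (u \<sigma>) * f n \<sigma> \<tau> * v \<tau>)" if "\<sigma> \<in> CC" "\<tau> \<in> CC" for \<sigma> \<tau>
    by (rule summable_mult2[OF summable_mult[OF s[OF that]]])
  have s2: "summable (\<lambda>n. \<Sum>\<tau>\<in>CC. cnj (u \<sigma>) * f n \<sigma> \<tau> * v \<tau>)" if "\<sigma> \<in> CC" for \<sigma>
    by (rule summable_sum) (rule s1[OF that])
  have "bil CC (\<lambda>\<sigma> \<tau>. \<Sum>n. f n \<sigma> \<tau>) u v = (\<Sum>\<sigma>\<in>CC. \<Sum>\<tau>\<in>CC. \<Sum>n. cnj (u \<sigma>) * f n \<sigma> \<tau> * v \<tau>)"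
    unfolding bil_def
  proof (intro sum.cong refl)
    fix \<sigma> \<tau> assume st: "\<sigma> \<in> CC" "\<tau> \<in> CC"
    have "cnj (u \<sigma>) * (\<Sum>n. f n \<sigma> \<tau>) * v \<tau> = (\<Sum>n. cnj (u \<sigma>) * f n \<sigma> \<tau>) * v \<tau>"
      using suminf_mult[OF s[OF st], of "cnj (u \<sigma>)"] by simp
    also have "\<dots> = (\<Sum>n. cnj (u \<sigma>) * f n \<sigma> \<tau> * v \<tau>)"
      by (rule suminf_mult2[OF summable_mult[OF s[OF st]]])
    finally show "cnj (u \<sigma>) * (\<Sum>n. f n \<sigma> \<tau>) * v \<tau> = (\<Sum>n. cnj (u \<sigma>) * f n \<sigma> \<tau> * v \<tau>)" .
  qed
  also have "\<dots> = (\<Sum>\<sigma>\<in>CC. \<Sum>n. \<Sum>\<tau>\<in>CC. cnj (u \<sigma>) * f n \<sigma> \<tau> * v \<tau>)"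
    by (intro sum.cong refl suminf_sum[symmetric] s1)
  also have "\<dots> = (\<Sum>n. \<Sum>\<sigma>\<in>CC. \<Sum>\<tau>\<in>CC. cnj (u \<sigma>) * f n \<sigma> \<tau> * v \<tau>)"
    by (rule suminf_sum[symmetric]) (rule s2)
  finally show ?thesis unfolding bil_def .
qed

lemma DD_supp:
  assumes \<Theta>: "\<And>Z \<sigma> \<tau>. \<Theta> Z \<sigma> \<tau> \<noteq> 0 \<Longrightarrow> x0 \<in> Z"
  shows "DD \<Phi> \<Theta> n u Z \<sigma> \<tau> \<noteq> 0 \<Longrightarrow> x0 \<in> Z"
proof (induction n arbitrary: u Z \<sigma> \<tau>)
  case 0
  then show ?case using \<Theta> by simp
next
  case (Suc n)
  show ?case
  proof (rule ccontr)
    assume x: "x0 \<notin> Z"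
    have "ad_pot \<Lambda> d (\<Phi> s) (DD \<Phi> \<Theta> n s) Z \<sigma> \<tau> = 0" for s
      unfolding ad_expand
    proof (rule sum.neutral, rule ballI)
      fix p assume p: "p \<in> Pr Z"
      then have "x0 \<notin> snd p" using x by (auto simp: Pr_def)
      then have "DD \<Phi> \<Theta> n s (snd p) a b = 0" for a b using Suc.IH by blast
      then show "(\<Sum>\<rho>\<in>CC. \<Phi> s (fst p) \<sigma> \<rho> * DD \<Phi> \<Theta> n s (snd p) \<rho> \<tau> - DD \<Phi> \<Theta> n s (snd p) \<sigma> \<rho> * \<Phi> s (fst p) \<rho> \<tau>) = 0"
        by simp
    qed
    then have "DD \<Phi> \<Theta> (Suc n) u Z \<sigma> \<tau> = 0" by simp
    with Suc.prems show False by simp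
  qed
qed

lemma DD_empty:
  assumes "\<Theta> = single_pot {} Ob"
  shows "DD \<Phi> \<Theta> (Suc n) u Z \<sigma> \<tau> = 0"
proof (induction n arbitrary: u Z \<sigma> \<tau>)
  case 0
  have "ad_pot \<Lambda> d (\<Phi> s) \<Theta> Z \<sigma> \<tau> = 0" for s
    unfolding ad_expand
  proof (rule sum.neutral, rule ballI)
    fix p assume p: "p \<in> Pr Z"
    then have "snd p \<noteq> {}" by (auto simp: Pr_def)
    then show "(\<Sum>\<rho>\<in>CC. \<Phi> s (fst p) \<sigma> \<rho> * \<Theta> (snd p) \<rho> \<tau> - \<Theta> (snd p) \<sigma> \<rho> * \<Phi> s (fst p) \<rho> \<tau>) = 0"
      by (simp add: assms single_pot_def)
  qed
  then show ?case by simp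
next
  case (Suc n)
  then show ?case by (simp add: ad_expand)
qed

end


locale fin = sys \<Lambda> d for \<Lambda> :: "'s set" and d :: "'s \<Rightarrow> nat" +
  fixes \<Phi> \<Phi>' :: "real \<Rightarrow> 's pot" and \<Theta> :: "'s pot" and t \<kappa> :: real
  assumes gP: "goodfam t \<Phi>" and gP': "goodfam t \<Phi>'" and t0: "0 < t" and k0: "0 < \<kappa>"
    and smallA: "integral {0..t} (\<lambda>s. pot_norm \<Lambda> d \<kappa> (\<Phi> s)) \<le> \<kappa>/24"
    and smallA': "integral {0..t} (\<lambda>s. pot_norm \<Lambda> d \<kappa> (\<Phi>' s)) \<le> \<kappa>/24"
begin

lemma Dys: "0 < n \<Longrightarrow> dys \<Lambda> d \<Phi> \<Phi>' t \<kappa> (2*\<kappa>/3) n"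
  unfolding dys_def dys_axioms_def using sys_axioms gP gP' t0 k0 by auto

lemma DD_bound: "pot_norm \<Lambda> d (\<kappa>/3) (DD \<Phi> \<Theta> n t) \<le> (1/4) ^ n * pot_norm \<Lambda> d \<kappa> \<Theta>"
proof (cases "n = 0")
  case True
  then show ?thesis using k0 by (simp add: pn_mono)
next
  case False
  then have n: "0 < n" by simp
  interpret D: dys \<Lambda> d \<Phi> \<Phi>' \<Theta> t \<kappa> "2*\<kappa>/3" n by (rule Dys[OF n])
  have lev: "D.lev n = \<kappa>/3" using n by (simp add: D.lev_def D.hh_def)
  have "pot_norm \<Lambda> d (\<kappa>/3) (DD \<Phi> \<Theta> n t) \<le> D.cc ^ n * D.AA t ^ n / fact n * D.th"
    using D.D_bound[of n t] t0 lev by simp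
  also have "\<dots> \<le> (1/4) ^ n * D.th"
  proof (rule mult_right_mono)
    show "D.cc ^ n * D.AA t ^ n / fact n \<le> (1/4) ^ n"
      unfolding D.cc_def D.hh_def
      by (rule arith1) (use D.AA0[of t] t0 smallA k0 n in \<open>auto simp: D.AA_def D.aa_def[abs_def]\<close>)
    show "0 \<le> D.th" by (rule D.aa0)
  qed
  finally show ?thesis by (simp add: D.th_def)
qed

lemma EE_bound: "pot_norm \<Lambda> d (\<kappa>/3) (\<lambda>Z \<sigma> \<tau>. DD \<Phi> \<Theta> n t Z \<sigma> \<tau> - DD \<Phi>' \<Theta> n t Z \<sigma> \<tau>)
   \<le> 6/\<kappa> * (real n ^ 2 * (1/2) ^ (n - 1)) * integral {0..t} (\<lambda>s. pot_norm \<Lambda> d \<kappa> (\<lambda>Z \<sigma> \<tau>. \<Phi> s Z \<sigma> \<tau> - \<Phi>' s Z \<sigma> \<tau>)) * pot_norm \<Lambda> d \<kappa> \<Theta>"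
proof (cases "n = 0")
  case True
  then show ?thesis by (simp add: pn_zero)
next
  case False
  then have n: "0 < n" by simp
  interpret D: dys \<Lambda> d \<Phi> \<Phi>' \<Theta> t \<kappa> "2*\<kappa>/3" n by (rule Dys[OF n])
  have lev: "D.lev n = \<kappa>/3" using n by (simp add: D.lev_def D.hh_def)
  have BB: "D.BB t \<le> \<kappa>/12"
  proof -
    have "D.BB t = integral {0..t} D.aa + integral {0..t} D.aa'"
      unfolding D.BB_def
      by (rule integral_add) (use meas_bnd_int[OF D.aa_mb] meas_bnd_int[OF D.aa'_mb] in auto)
    also have "\<dots> \<le> \<kappa>/24 + \<kappa>/24" using smallA smallA'
      by (simp add: D.aa_def[abs_def] D.aa'_def[abs_def])
    finally show ?thesis by simp
  qed
  have "pot_norm \<Lambda> d (\<kappa>/3) (\<lambda>Z \<sigma> \<tau>. DD \<Phi> \<Theta> n t Z \<sigma> \<tau> - DD \<Phi>' \<Theta> n t Z \<sigma> \<tau>)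
      \<le> D.cc ^ n * D.GG t * real n * D.BB t ^ (n - 1) / fact (n - 1) * D.th"
    using D.E_bound[of n t] t0 lev by (simp add: D.EE_def)
  also have "\<dots> = (D.cc ^ n * real n * D.BB t ^ (n - 1) / fact (n - 1)) * (D.GG t * D.th)"
    by (simp add: field_simps)
  also have "\<dots> \<le> 6/\<kappa> * (real n ^ 2 * (1/2) ^ (n - 1)) * (D.GG t * D.th)"
  proof (rule mult_right_mono)
    show "D.cc ^ n * real n * D.BB t ^ (n - 1) / fact (n - 1) \<le> 6/\<kappa> * (real n ^ 2 * (1/2) ^ (n - 1))"
      unfolding D.cc_def D.hh_def
      by (rule arith2) (use D.BB_mono(2)[of t] t0 BB k0 n in auto)
    show "0 \<le> D.GG t * D.th" using D.GG_mono(2)[of t] t0 D.aa0 by simp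
  qed
  finally show ?thesis by (simp add: D.GG_def D.gg_def[abs_def] D.Dl_def[abs_def] D.th_def mult.assoc)
qed

end


context fin
begin

lemma entry_bound:
  assumes supp: "\<And>Z \<sigma> \<tau>. Q Z \<sigma> \<tau> \<noteq> 0 \<Longrightarrow> x0 \<in> Z"
    and r: "Z \<subseteq> \<Lambda>" "\<sigma> \<in> CC" "\<tau> \<in> CC" and k: "0 \<le> k"
  shows "cmod (Q Z \<sigma> \<tau>) \<le> pot_norm \<Lambda> d k Q"
proof (cases "x0 \<in> Z")
  case True
  have "cmod (Q Z \<sigma> \<tau>) \<le> opnorm CC (Q Z)" by (rule entry_le_opnorm[OF finC r(2,3)])
  also have "\<dots> \<le> pot_norm \<Lambda> d k Q" by (rule opnorm_le_pn[OF r(1) True k])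
  finally show ?thesis .
next
  case False
  then have "Q Z \<sigma> \<tau> = 0" using supp[of Z \<sigma> \<tau>] by blast
  then show ?thesis using pn_nonneg[of k Q] by simp
qed

lemma dyson_eq:
  assumes g: "goodfam t \<Psi>" and r: "Z \<subseteq> \<Lambda>" "\<sigma> \<in> CC" "\<tau> \<in> CC"
  shows "dyson \<Lambda> d \<Psi> t \<Theta> Z \<sigma> \<tau> = (\<Sum>n. \<i> ^ n * DD \<Psi> \<Theta> n t Z \<sigma> \<tau>)"
proof -
  have "iter_int n t (\<lambda>ts. foldr (\<lambda>s acc. ad_pot \<Lambda> d (\<Psi> s) acc) ts \<Theta>) Z \<sigma> \<tau> = DD \<Psi> \<Theta> n t Z \<sigma> \<tau>" for n
    using iter_int_DD[OF g goodL_id, of t Z \<sigma> \<tau> n \<Theta>] t0 r by (simp add: rel_def)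
  then show ?thesis by (simp add: dyson_def)
qed

lemma main_est:
  assumes supp: "\<And>Z \<sigma> \<tau>. \<Theta> Z \<sigma> \<tau> \<noteq> 0 \<Longrightarrow> x0 \<in> Z" and x0: "x0 \<in> \<Lambda>"
  shows "opnorm CC (\<lambda>\<sigma> \<tau>. assoc_op \<Lambda> (dyson \<Lambda> d \<Phi> t \<Theta>) \<sigma> \<tau> - assoc_op \<Lambda> (dyson \<Lambda> d \<Phi>' t \<Theta>) \<sigma> \<tau>)
    \<le> exp (- (\<kappa>/3)) * (192/\<kappa>) * integral {0..t} (\<lambda>s. pot_norm \<Lambda> d \<kappa> (\<lambda>Z \<sigma> \<tau>. \<Phi> s Z \<sigma> \<tau> - \<Phi>' s Z \<sigma> \<tau>)) * pot_norm \<Lambda> d \<kappa> \<Theta>"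
proof -
  define th where "th = pot_norm \<Lambda> d \<kappa> \<Theta>"
  define G where "G = integral {0..t} (\<lambda>s. pot_norm \<Lambda> d \<kappa> (\<lambda>Z \<sigma> \<tau>. \<Phi> s Z \<sigma> \<tau> - \<Phi>' s Z \<sigma> \<tau>))"
  define E where "E n = (\<lambda>Z \<sigma> \<tau>. DD \<Phi> \<Theta> n t Z \<sigma> \<tau> - DD \<Phi>' \<Theta> n t Z \<sigma> \<tau>)" for n
  have th0: "0 \<le> th" by (simp add: th_def pn_nonneg)
  have G0: "0 \<le> G"
  proof -
    have gD: "goodfam t (\<lambda>s Z \<sigma> \<tau>. \<Phi> s Z \<sigma> \<tau> - \<Phi>' s Z \<sigma> \<tau>)" by (rule goodfam_diff[OF gP gP'])
    show ?thesis unfolding G_def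
      by (rule integral_nonneg[OF meas_bnd_int[OF pn_meas_bnd[OF gD]]]) (auto simp: pn_nonneg)
  qed
  have k3: "0 \<le> \<kappa>/3" using k0 by simp
  have suppD: "DD \<Psi> \<Theta> n t Z \<sigma> \<tau> \<noteq> 0 \<Longrightarrow> x0 \<in> Z" for \<Psi> n Z \<sigma> \<tau> by (rule DD_supp[OF supp])
  have suppE: "E n Z \<sigma> \<tau> \<noteq> 0 \<Longrightarrow> x0 \<in> Z" for n Z \<sigma> \<tau> using suppD[of \<Phi> n Z \<sigma> \<tau>] suppD[of \<Phi>' n Z \<sigma> \<tau>]
    by (cases "DD \<Phi> \<Theta> n t Z \<sigma> \<tau> = 0") (auto simp: E_def)
  have DDbP: "pot_norm \<Lambda> d (\<kappa>/3) (DD \<Phi> \<Theta> n t) \<le> (1/4) ^ n * th" for n by (simp add: th_def DD_bound)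
  have DDbP': "pot_norm \<Lambda> d (\<kappa>/3) (DD \<Phi>' \<Theta> n t) \<le> (1/4) ^ n * th" for n
  proof -
    interpret F': fin \<Lambda> d \<Phi>' \<Phi> \<Theta> t \<kappa> by unfold_locales (use gP gP' t0 k0 smallA smallA' in auto)
    show ?thesis using F'.DD_bound[of n] by (simp add: th_def)
  qed
  have summ: "summable (\<lambda>n. \<i> ^ n * DD \<Psi> \<Theta> n t Z \<sigma> \<tau>)"
    if b: "\<And>n. pot_norm \<Lambda> d (\<kappa>/3) (DD \<Psi> \<Theta> n t) \<le> (1/4) ^ n * th" and r: "Z \<subseteq> \<Lambda>" "\<sigma> \<in> CC" "\<tau> \<in> CC" for \<Psi> Z \<sigma> \<tau>
  proof (rule summable_comparison_test)
    show "summable (\<lambda>n. (1/4::real) ^ n * th)" by (intro summable_mult2 summable_geometric) simp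
    show "\<exists>N. \<forall>n\<ge>N. norm (\<i> ^ n * DD \<Psi> \<Theta> n t Z \<sigma> \<tau>) \<le> (1/4) ^ n * th"
    proof (intro exI allI impI)
      fix n :: nat
      have "norm (\<i> ^ n * DD \<Psi> \<Theta> n t Z \<sigma> \<tau>) = cmod (DD \<Psi> \<Theta> n t Z \<sigma> \<tau>)" by (simp add: norm_mult norm_power)
      also have "\<dots> \<le> pot_norm \<Lambda> d (\<kappa>/3) (DD \<Psi> \<Theta> n t)"
        by (rule entry_bound[OF _ r k3]) (rule suppD)
      also have "\<dots> \<le> (1/4) ^ n * th" by (rule b)
      finally show "norm (\<i> ^ n * DD \<Psi> \<Theta> n t Z \<sigma> \<tau>) \<le> (1/4) ^ n * th" .
    qed
  qed
  have sP: "summable (\<lambda>n. \<i> ^ n * DD \<Phi> \<Theta> n t Z \<sigma> \<tau>)" if "Z \<subseteq> \<Lambda>" "\<sigma> \<in> CC" "\<tau> \<in> CC" for Z \<sigma> \<tau>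
    by (rule summ[OF DDbP that])
  have sP': "summable (\<lambda>n. \<i> ^ n * DD \<Phi>' \<Theta> n t Z \<sigma> \<tau>)" if "Z \<subseteq> \<Lambda>" "\<sigma> \<in> CC" "\<tau> \<in> CC" for Z \<sigma> \<tau>
    by (rule summ[OF DDbP' that])
  define M where "M n = (\<lambda>\<sigma> \<tau>. \<Sum>Z\<in>Pow \<Lambda>. \<i> ^ n * E n Z \<sigma> \<tau>)" for n
  have sE: "summable (\<lambda>n. \<i> ^ n * E n Z \<sigma> \<tau>)" if "Z \<subseteq> \<Lambda>" "\<sigma> \<in> CC" "\<tau> \<in> CC" for Z \<sigma> \<tau>
    using summable_diff[OF sP[OF that] sP'[OF that]] by (simp add: E_def algebra_simps)
  have sM: "summable (\<lambda>n. M n \<sigma> \<tau>)" if "\<sigma> \<in> CC" "\<tau> \<in> CC" for \<sigma> \<tau>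
    unfolding M_def by (rule summable_sum) (use sE that in auto)
  have diff_eq: "assoc_op \<Lambda> (dyson \<Lambda> d \<Phi> t \<Theta>) \<sigma> \<tau> - assoc_op \<Lambda> (dyson \<Lambda> d \<Phi>' t \<Theta>) \<sigma> \<tau> = (\<Sum>n. M n \<sigma> \<tau>)"
    if st: "\<sigma> \<in> CC" "\<tau> \<in> CC" for \<sigma> \<tau>
  proof -
    have "assoc_op \<Lambda> (dyson \<Lambda> d \<Phi> t \<Theta>) \<sigma> \<tau> - assoc_op \<Lambda> (dyson \<Lambda> d \<Phi>' t \<Theta>) \<sigma> \<tau>
        = (\<Sum>Z\<in>Pow \<Lambda>. (\<Sum>n. \<i> ^ n * DD \<Phi> \<Theta> n t Z \<sigma> \<tau>) - (\<Sum>n. \<i> ^ n * DD \<Phi>' \<Theta> n t Z \<sigma> \<tau>))"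
      unfolding assoc_op_def sum_subtractf[symmetric]
      by (intro sum.cong refl) (simp add: dyson_eq[OF gP _ st] dyson_eq[OF gP' _ st])
    also have "\<dots> = (\<Sum>Z\<in>Pow \<Lambda>. \<Sum>n. \<i> ^ n * E n Z \<sigma> \<tau>)"
      by (intro sum.cong refl) (simp add: suminf_diff[OF sP sP'] st E_def algebra_simps)
    also have "\<dots> = (\<Sum>n. M n \<sigma> \<tau>)"
      unfolding M_def by (rule suminf_sum[symmetric]) (use sE st in auto)
    finally show ?thesis .
  qed
  define b where "b n = exp (- (\<kappa>/3)) * pot_norm \<Lambda> d (\<kappa>/3) (E n)" for n
  have Mb: "opnorm CC (M n) \<le> b n" for n
  proof -
    have "opnorm CC (M n) \<le> (\<Sum>Z\<in>Pow \<Lambda>. opnorm CC (\<lambda>\<sigma> \<tau>. \<i> ^ n * E n Z \<sigma> \<tau>))"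
      unfolding M_def by (rule opnorm_sum[OF finC])
    also have "\<dots> \<le> (\<Sum>Z\<in>Pow \<Lambda>. opnorm CC (E n Z))"
      by (intro sum_mono order_trans[OF opnorm_scale]) (simp add: norm_power)
    also have "\<dots> = (\<Sum>Z\<in>Zs x0. opnorm CC (E n Z))"
    proof (rule sum.mono_neutral_right)
      show "finite (Pow \<Lambda>)" by (simp add: finL)
      show "Zs x0 \<subseteq> Pow \<Lambda>" by (auto simp: Zs_def)
      show "\<forall>Z\<in>Pow \<Lambda> - Zs x0. opnorm CC (E n Z) = 0"
      proof
        fix Z assume "Z \<in> Pow \<Lambda> - Zs x0"
        then have "x0 \<notin> Z" by (auto simp: Zs_def)
        then have "opnorm CC (E n Z) = opnorm CC (\<lambda>_ _. 0)"
          using suppE by (intro opnorm_cong[OF finC]) blast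
        then show "opnorm CC (E n Z) = 0" by (simp add: opnorm_zero[OF finC])
      qed
    qed
    also have "\<dots> \<le> (\<Sum>Z\<in>Zs x0. exp (- (\<kappa>/3)) * (exp (\<kappa>/3 * real (card Z)) * opnorm CC (E n Z)))"
    proof (rule sum_mono)
      fix Z assume Z: "Z \<in> Zs x0"
      then have "1 \<le> card Z" using finL by (auto simp: Zs_def Suc_le_eq card_gt_0_iff intro: finite_subset)
      then have "\<kappa>/3 \<le> \<kappa>/3 * real (card Z)" using k0 by simp
      then have "1 \<le> exp (- (\<kappa>/3)) * exp (\<kappa>/3 * real (card Z))"
        by (simp add: exp_add[symmetric])
      then show "opnorm CC (E n Z) \<le> exp (- (\<kappa>/3)) * (exp (\<kappa>/3 * real (card Z)) * opnorm CC (E n Z))"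
        using opnorm_nonneg[OF finC, of "E n Z"] mult_right_mono by (fastforce simp: mult.assoc[symmetric])
    qed
    also have "\<dots> = exp (- (\<kappa>/3)) * wsum (\<kappa>/3) (E n) x0"
      by (simp add: wsum_def sum_distrib_left)
    also have "\<dots> \<le> b n" unfolding b_def by (intro mult_left_mono wsum_le_pn x0) auto
    finally show ?thesis .
  qed
  define c0 where "c0 = exp (- (\<kappa>/3)) * (6/\<kappa>) * G * th * 8"
  have c00: "0 \<le> c0" using k0 G0 th0 by (simp add: c0_def)
  have bgeo: "b n \<le> c0 * (3/4) ^ n" for n
  proof -
    have "b n \<le> exp (- (\<kappa>/3)) * (6/\<kappa> * (real n ^ 2 * (1/2) ^ (n - 1)) * G * th)"
      unfolding b_def E_def G_def th_def by (intro mult_left_mono EE_bound) auto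
    also have "\<dots> \<le> exp (- (\<kappa>/3)) * (6/\<kappa> * (8 * (3/4) ^ n) * G * th)"
      using k0 G0 th0 by (intro mult_left_mono mult_right_mono geo_bound) auto
    also have "\<dots> = c0 * (3/4) ^ n" by (simp add: c0_def)
    finally show ?thesis .
  qed
  have b0: "0 \<le> b n" for n by (simp add: b_def pn_nonneg)
  have sg: "summable (\<lambda>n. c0 * (3/4::real) ^ n)" by (intro summable_mult summable_geometric) simp
  have sb: "summable b" by (rule summable_comparison_test[OF _ sg]) (use bgeo b0 in auto)
  have sumb: "suminf b \<le> 4 * c0"
  proof -
    have "suminf b \<le> (\<Sum>n. c0 * (3/4::real) ^ n)" by (rule suminf_le[OF bgeo sb sg])
    also have "\<dots> = c0 * (1 / (1 - 3/4))" by (simp add: suminf_mult summable_geometric suminf_geometric)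
    finally show ?thesis by simp
  qed
  have "opnorm CC (\<lambda>\<sigma> \<tau>. assoc_op \<Lambda> (dyson \<Lambda> d \<Phi> t \<Theta>) \<sigma> \<tau> - assoc_op \<Lambda> (dyson \<Lambda> d \<Phi>' t \<Theta>) \<sigma> \<tau>) \<le> suminf b"
  proof (rule opnorm_le_bil[OF finC])
    fix u v assume uv: "vn CC u \<le> 1" "vn CC v \<le> 1"
    have "bil CC (\<lambda>\<sigma> \<tau>. assoc_op \<Lambda> (dyson \<Lambda> d \<Phi> t \<Theta>) \<sigma> \<tau> - assoc_op \<Lambda> (dyson \<Lambda> d \<Phi>' t \<Theta>) \<sigma> \<tau>) u v
        = bil CC (\<lambda>\<sigma> \<tau>. \<Sum>n. M n \<sigma> \<tau>) u v"
      by (rule bil_cong) (rule diff_eq)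
    also have "\<dots> = (\<Sum>n. bil CC (M n) u v)" by (rule bil_suminf) (rule sM)
    finally have e: "bil CC (\<lambda>\<sigma> \<tau>. assoc_op \<Lambda> (dyson \<Lambda> d \<Phi> t \<Theta>) \<sigma> \<tau> - assoc_op \<Lambda> (dyson \<Lambda> d \<Phi>' t \<Theta>) \<sigma> \<tau>) u v
        = (\<Sum>n. bil CC (M n) u v)" .
    have "norm (\<Sum>n. bil CC (M n) u v) \<le> suminf b"
    proof (rule norm_suminf_le[OF _ sb])
      fix n show "norm (bil CC (M n) u v) \<le> b n"
        using bil_bound1[OF finC uv, of "M n"] Mb[of n] by simp
    qed
    then show "cmod (bil CC (\<lambda>\<sigma> \<tau>. assoc_op \<Lambda> (dyson \<Lambda> d \<Phi> t \<Theta>) \<sigma> \<tau> - assoc_op \<Lambda> (dyson \<Lambda> d \<Phi>' t \<Theta>) \<sigma> \<tau>) u v) \<le> suminf b"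
      by (simp add: e)
  qed
  also have "\<dots> \<le> 4 * c0" by (rule sumb)
  also have "4 * c0 = exp (- (\<kappa>/3)) * (192/\<kappa>) * G * th" by (simp add: c0_def)
  finally show ?thesis by (simp add: G_def th_def)
qed

end


theorem lemma8:
  fixes \<Lambda> :: "'s set" and d :: "'s \<Rightarrow> nat"
    and \<Phi> \<Phi>' :: "real \<Rightarrow> 's pot" and Ob :: "'s op" and S :: "'s set"
    and t \<kappa> :: real
  assumes "finite \<Lambda>" and "\<forall>x\<in>\<Lambda>. 0 < d x"
    and "0 < t" and "0 < \<kappa>"
    and "tpot \<Lambda> d t \<Phi>" and "tpot \<Lambda> d t \<Phi>'"
    and "S \<subseteq> \<Lambda>" and "supported_on \<Lambda> d S Ob"
    and "24 * max (tpot_norm \<Lambda> d \<kappa> t \<Phi>) (tpot_norm \<Lambda> d \<kappa> t \<Phi>') * t \<le> \<kappa>"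
  shows "let lam = max (tpot_norm \<Lambda> d \<kappa> t \<Phi>) (tpot_norm \<Lambda> d \<kappa> t \<Phi>');
             M = 288 / \<kappa>\<^sup>2;
             C = 1 + M * lam * t
         in opnorm (configs \<Lambda> d)
              (\<lambda>\<sigma> \<tau>. assoc_op \<Lambda> (dyson \<Lambda> d \<Phi> t (single_pot S Ob)) \<sigma> \<tau>
                    - assoc_op \<Lambda> (dyson \<Lambda> d \<Phi>' t (single_pot S Ob)) \<sigma> \<tau>)
            \<le> C ^ 3 * M * exp (\<kappa> * real (card S)) * opnorm (configs \<Lambda> d) Ob * t
               * tpot_norm \<Lambda> d \<kappa> t (\<lambda>s. pot_diff (\<Phi> s) (\<Phi>' s))"
proof -
  interpret sys \<Lambda> d by unfold_locales (rule assms(1))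
  note t0 = assms(3) and k0 = assms(4)
  define lam where "lam = max (tpot_norm \<Lambda> d \<kappa> t \<Phi>) (tpot_norm \<Lambda> d \<kappa> t \<Phi>')"
  define \<Theta> where "\<Theta> = single_pot S Ob"
  define \<gamma> where "\<gamma> = tpot_norm \<Lambda> d \<kappa> t (\<lambda>s. pot_diff (\<Phi> s) (\<Phi>' s))"
  define M where "M = 288 / \<kappa>\<^sup>2"
  define C where "C = 1 + M * lam * t"
  define LHS where "LHS = opnorm CC (\<lambda>\<sigma> \<tau>. assoc_op \<Lambda> (dyson \<Lambda> d \<Phi> t \<Theta>) \<sigma> \<tau> - assoc_op \<Lambda> (dyson \<Lambda> d \<Phi>' t \<Theta>) \<sigma> \<tau>)"
  have gP: "goodfam t \<Phi>" by (rule tpot_goodfam[OF assms(5)])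
  have gP': "goodfam t \<Phi>'" by (rule tpot_goodfam[OF assms(6)])
  have tp: "integral {0..t} (\<lambda>s. pot_norm \<Lambda> d \<kappa> (\<Psi> s)) = t * tpot_norm \<Lambda> d \<kappa> t \<Psi>" for \<Psi>
    using t0 by (simp add: tpot_norm_def)
  have tpn: "0 \<le> tpot_norm \<Lambda> d \<kappa> t \<Psi>" if "goodfam t \<Psi>" for \<Psi>
  proof -
    have "0 \<le> integral {0..t} (\<lambda>s. pot_norm \<Lambda> d \<kappa> (\<Psi> s))"
      by (rule integral_nonneg[OF meas_bnd_int[OF pn_meas_bnd[OF that]]]) (auto simp: pn_nonneg)
    then show ?thesis using t0 by (simp add: tpot_norm_def)
  qed
  have lam0: "0 \<le> lam" using tpn[OF gP] by (simp add: lam_def)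
  have small: "t * lam \<le> \<kappa>/24" using assms(9) by (simp add: lam_def algebra_simps)
  have smallA: "integral {0..t} (\<lambda>s. pot_norm \<Lambda> d \<kappa> (\<Phi> s)) \<le> \<kappa>/24"
  proof -
    have "t * tpot_norm \<Lambda> d \<kappa> t \<Phi> \<le> t * lam" using t0 by (intro mult_left_mono) (auto simp: lam_def)
    then show ?thesis using small tp[of \<Phi>] by simp
  qed
  have smallA': "integral {0..t} (\<lambda>s. pot_norm \<Lambda> d \<kappa> (\<Phi>' s)) \<le> \<kappa>/24"
  proof -
    have "t * tpot_norm \<Lambda> d \<kappa> t \<Phi>' \<le> t * lam" using t0 by (intro mult_left_mono) (auto simp: lam_def)
    then show ?thesis using small tp[of \<Phi>'] by simp
  qed
  interpret F: fin \<Lambda> d \<Phi> \<Phi>' \<Theta> t \<kappa>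
    by unfold_locales (use gP gP' t0 k0 smallA smallA' in auto)
  have gD: "goodfam t (\<lambda>s. pot_diff (\<Phi> s) (\<Phi>' s))"
    unfolding pot_diff_def by (rule goodfam_diff[OF gP gP'])
  have \<gamma>0: "0 \<le> \<gamma>" unfolding \<gamma>_def by (rule tpn[OF gD])
  have Gt: "integral {0..t} (\<lambda>s. pot_norm \<Lambda> d \<kappa> (\<lambda>Z \<sigma> \<tau>. \<Phi> s Z \<sigma> \<tau> - \<Phi>' s Z \<sigma> \<tau>)) = t * \<gamma>"
    using tp[of "\<lambda>s. pot_diff (\<Phi> s) (\<Phi>' s)"] by (simp add: \<gamma>_def pot_diff_def)
  have thb: "pot_norm \<Lambda> d \<kappa> \<Theta> \<le> exp (\<kappa> * real (card S)) * opnorm CC Ob"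
  proof (rule pn_le)
    show "0 \<le> exp (\<kappa> * real (card S)) * opnorm CC Ob" by (simp add: opnorm_nonneg[OF finC])
    fix x assume x: "x \<in> \<Lambda>"
    have "wsum \<kappa> \<Theta> x = (\<Sum>Z\<in>Zs x. if Z = S then exp (\<kappa> * real (card S)) * opnorm CC Ob else 0)"
      unfolding wsum_def by (intro sum.cong refl) (auto simp: \<Theta>_def single_pot_def opnorm_zero[OF finC])
    also have "\<dots> \<le> exp (\<kappa> * real (card S)) * opnorm CC Ob"
      by (simp add: sum.delta[OF finZs] opnorm_nonneg[OF finC])
    finally show "wsum \<kappa> \<Theta> x \<le> exp (\<kappa> * real (card S)) * opnorm CC Ob" .
  qed
  define K where "K = t * \<gamma> * (exp (\<kappa> * real (card S)) * opnorm CC Ob)"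
  have K0: "0 \<le> K" using t0 \<gamma>0 by (simp add: K_def opnorm_nonneg[OF finC])
  have main: "LHS \<le> exp (- (\<kappa>/3)) * (192/\<kappa>) * K"
  proof (cases "S = {}")
    case True
    have eq: "dyson \<Lambda> d \<Phi> t \<Theta> Z \<sigma> \<tau> = dyson \<Lambda> d \<Phi>' t \<Theta> Z \<sigma> \<tau>" if "Z \<subseteq> \<Lambda>" "\<sigma> \<in> CC" "\<tau> \<in> CC" for Z \<sigma> \<tau>
    proof -
      have "DD \<Phi> \<Theta> n t Z \<sigma> \<tau> = DD \<Phi>' \<Theta> n t Z \<sigma> \<tau>" for n
      proof (cases n)
        case 0 then show ?thesis by simp
      next
        case (Suc m)
        then show ?thesis using DD_empty[of \<Theta> Ob \<Phi> m t Z \<sigma> \<tau>] DD_empty[of \<Theta> Ob \<Phi>' m t Z \<sigma> \<tau>] True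
          by (simp add: \<Theta>_def)
      qed
      then show ?thesis by (simp add: F.dyson_eq[OF gP that] F.dyson_eq[OF gP' that])
    qed
    have "LHS = opnorm CC (\<lambda>_ _. 0)"
      unfolding LHS_def by (intro opnorm_cong[OF finC]) (simp add: assoc_op_def eq)
    then have "LHS = 0" by (simp add: opnorm_zero[OF finC])
    then show ?thesis using K0 k0 by simp
  next
    case False
    then obtain x0 where x0: "x0 \<in> S" by blast
    have supp: "\<Theta> Z \<sigma> \<tau> \<noteq> 0 \<Longrightarrow> x0 \<in> Z" for Z \<sigma> \<tau> using x0 by (auto simp: \<Theta>_def single_pot_def split: if_splits)
    have "LHS \<le> exp (- (\<kappa>/3)) * (192/\<kappa>) * (t * \<gamma>) * pot_norm \<Lambda> d \<kappa> \<Theta>"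
      unfolding LHS_def Gt[symmetric] by (rule F.main_est[OF supp]) (use x0 assms(7) in auto)
    also have "\<dots> \<le> exp (- (\<kappa>/3)) * (192/\<kappa>) * (t * \<gamma>) * (exp (\<kappa> * real (card S)) * opnorm CC Ob)"
      using k0 t0 \<gamma>0 by (intro mult_left_mono thb) auto
    finally show ?thesis by (simp add: K_def mult.assoc)
  qed
  have ar: "exp (- (\<kappa>/3)) * (192/\<kappa>) \<le> C ^ 3 * M"
  proof -
    have e2: "2 \<le> exp (1::real)" using exp_ge_add_one_self[of 1] by simp
    have "exp 1 * (\<kappa>/3) \<le> exp (\<kappa>/3)" by (rule exp_ge_e_mult)
    moreover have "2 * (\<kappa>/3) \<le> exp 1 * (\<kappa>/3)" by (rule mult_right_mono[OF e2]) (use k0 in simp)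
    ultimately have "2 * (\<kappa>/3) \<le> exp (\<kappa>/3)" by linarith
    then have "exp (- (\<kappa>/3)) * (192/\<kappa>) \<le> M"
      using k0 by (simp add: M_def exp_minus field_simps power2_eq_square)
    also have "M \<le> C ^ 3 * M"
    proof -
      have "1 \<le> C" using lam0 t0 k0 by (simp add: C_def M_def)
      then have "1 \<le> C ^ 3" by (rule one_le_power)
      moreover have "0 \<le> M" by (simp add: M_def)
      ultimately show ?thesis using mult_right_mono[of 1 "C ^ 3" M] by simp
    qed
    finally show ?thesis .
  qed
  have "LHS \<le> C ^ 3 * M * K" using main mult_right_mono[OF ar K0] by linarith
  moreover have "C ^ 3 * M * K = C ^ 3 * M * exp (\<kappa> * real (card S)) * opnorm CC Ob * t * \<gamma>"
    by (simp add: K_def algebra_simps)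
  ultimately have fin: "LHS \<le> C ^ 3 * M * exp (\<kappa> * real (card S)) * opnorm CC Ob * t * \<gamma>" by simp
  show ?thesis
    unfolding Let_def lam_def[symmetric] M_def[symmetric] C_def[symmetric] \<gamma>_def[symmetric] \<Theta>_def[symmetric]
      LHS_def[symmetric] by (rule fin)
qed


end
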